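(* Let $M\ge1$ and $\mathbf a\in\mathcal A_M$. Then the sequence $\mathbf a^\infty$ is irreducible (as a sequence) if and only if the word $\mathbf a$ is irreducible (as a fundamental word).
   Context: Order and word operations. $\Omega_M=\{0,\dots,M\}^{\mathbb N}$ with lexicographic order and left shift $\sigma$; words are compared via $\mathbf c\prec\mathbf d$ iff $\mathbf c0^\infty\prec\mathbf d0^\infty$. For a word $c_1\dots c_k$: - $c_1\dots c_k^\pm=c_1\dots c_{k-1}(c_k\pm1)$, when defined; - $\overline{c_1\dots c_k}=(M-c_1)\dots(M-c_k)$, and $\overline{(c_i)}=(M-c_i)$. Irreducible sequences. Let $\mathbf V=\{(c_i)\in\Omega_M:\overline{(c_i)}\preceq\sigma^n((c_i))\preceq(c_i)\ \forall n\ge0\}$. A sequence $(a_i)\in\mathbf V$ is irreducible if for every $j\in\mathbb N$: whenever $a_j>0$ and $(a_1\dots a_j^-)^\infty\in\mathbf V$, we have $a_1\dots a_j(\overline{a_1\dots a_j}^+)^\infty\prec(a_i)$. Fundamental words. A word $a_1\dots a_m$ ($m\ge2$) is fundamental if $\overline{a_1\dots a_{m-i}}\preceq a_{i+1}\dots a_m\prec a_1\dots a_{m-i}$ for $1\le i<m$. When $M\ge2$, a letter $a_1$ is fundamental if $M-a_1\le a_1<M$. $\mathcal A_M$ is the set of fundamental words, and $\mathcal A_1$ is the case $M=1$. The graph. For $\mathbf a\in\mathcal A_M$, let $G$ have vertices Start, $A$, $B$ and edges - $e_0$: Start$\to A$, - $e_1$: $A\to B$, - $e_2$: $B\to B$,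 - $e_3$: $B\to A$, - $e_4$: $A\to A$. It carries two labelings: - $\mathcal L_{\mathbf a}$: $e_0,e_3\mapsto\mathbf a^+$; $e_1\mapsto\overline{\mathbf a^+}$; $e_2\mapsto\mathbf a$; $e_4\mapsto\overline{\mathbf a}$; - $\mathcal L^*$: $e_0,e_3,e_4\mapsto1$; $e_1,e_2\mapsto0$. Composition. For a path $e_{i_1}\dots e_{i_k}$ with $i_1=0$, let $\Phi_{\mathbf a}$ map $\mathcal L_{\mathbf a}(e_{i_1})\cdots\mathcal L_{\mathbf a}(e_{i_k})$ to $\mathcal L^*(e_{i_1}\dots e_{i_k})$. For $\mathbf d\in\mathcal A_1$, $\mathbf a\circ\mathbf d:=\Phi_{\mathbf a}^{-1}(\mathbf d)$. Irreducible words. $\mathbf a\in\mathcal A_M$ is irreducible if there are no $\mathbf c\in\mathcal A_M$, $\mathbf d\in\mathcal A_1$ with $\mathbf a=\mathbf c\circ\mathbf d$. *)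

theory Defs
  imports Main
begin

text \<open>Sequences (c_1 c_2 ...) are functions nat => nat, with index 0 holding c_1.
  Words are lists of naturals.\<close>

type_synonym seq = "nat \<Rightarrow> nat"
type_synonym word = "nat list"

definition in_Omega :: "nat \<Rightarrow> seq \<Rightarrow> bool" where
  "in_Omega M c \<longleftrightarrow> (\<forall>i. c i \<le> M)"

definition seq_less :: "seq \<Rightarrow> seq \<Rightarrow> bool" where
  "seq_less c d \<longleftrightarrow> (\<exists>n. (\<forall>i<n. c i = d i) \<and> c n < d n)"

definition seq_le :: "seq \<Rightarrow> seq \<Rightarrow> bool" where
  "seq_le c d \<longleftrightarrow> seq_less c d \<or> c = d"

definition shift :: "nat \<Rightarrow> seq \<Rightarrow> seq" where
  "shift n c = (\<lambda>i. c (i + n))"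

definition seq_bar :: "nat \<Rightarrow> seq \<Rightarrow> seq" where
  "seq_bar M c = (\<lambda>i. M - c i)"

definition word_bar :: "nat \<Rightarrow> word \<Rightarrow> word" where
  "word_bar M w = map (\<lambda>x. M - x) w"

definition word_plus :: "word \<Rightarrow> word" where
  "word_plus w = butlast w @ [last w + 1]"

definition word_minus :: "word \<Rightarrow> word" where
  "word_minus w = butlast w @ [last w - 1]"

definition pad0 :: "word \<Rightarrow> seq" where
  "pad0 w = (\<lambda>i. if i < length w then w ! i else 0)"

definition per :: "word \<Rightarrow> seq" where
  "per w = (\<lambda>i. w ! (i mod length w))"

definition prepend :: "word \<Rightarrow> seq \<Rightarrow> seq" where
  "prepend w c = (\<lambda>i. if i < length w then w ! i else c (i - length w))"

definition word_less :: "word \<Rightarrow> word \<Rightarrow> bool" where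
  "word_less c d \<longleftrightarrow> seq_less (pad0 c) (pad0 d)"

definition word_le :: "word \<Rightarrow> word \<Rightarrow> bool" where
  "word_le c d \<longleftrightarrow> seq_le (pad0 c) (pad0 d)"

definition pref :: "seq \<Rightarrow> nat \<Rightarrow> word" where
  "pref c j = map c [0..<j]"

definition in_V :: "nat \<Rightarrow> seq \<Rightarrow> bool" where
  "in_V M c \<longleftrightarrow> in_Omega M c \<and>
     (\<forall>n. seq_le (seq_bar M c) (shift n c) \<and> seq_le (shift n c) c)"

text \<open>Irreducible sequences; j ranges over positive integers (1-based).\<close>
definition irreducible_seq :: "nat \<Rightarrow> seq \<Rightarrow> bool" where
  "irreducible_seq M a \<longleftrightarrow> in_V M a \<and>
     (\<forall>j\<ge>1. (a (j - 1) > 0 \<and> in_V M (per (word_minus (pref a j)))) \<longrightarrow>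
        seq_less (prepend (pref a j) (per (word_plus (word_bar M (pref a j))))) a)"

definition fundamental :: "nat \<Rightarrow> word \<Rightarrow> bool" where
  "fundamental M w \<longleftrightarrow> (\<forall>x\<in>set w. x \<le> M) \<and>
     ((length w \<ge> 2 \<and>
        (\<forall>i. 1 \<le> i \<and> i < length w \<longrightarrow>
           word_le (word_bar M (take (length w - i) w)) (drop i w) \<and>
           word_less (drop i w) (take (length w - i) w)))
      \<or> (M \<ge> 2 \<and> length w = 1 \<and> M - hd w \<le> hd w \<and> hd w < M))"

text \<open>Composition a o d = Phi_a^{-1}(d) via the labelled graph G. The path is
  determined by its L*-label: from A, label 0 = e1 (to B), label 1 = e4 (to A);
  from B, label 0 = e2 (to B), label 1 = e3 (to A). The Boolean state says
  whether we are at vertex A. The first letter of d (which is 1) is e0.\<close>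
fun comp_aux :: "nat \<Rightarrow> word \<Rightarrow> bool \<Rightarrow> word \<Rightarrow> word" where
  "comp_aux M a st [] = []"
| "comp_aux M a True (x # xs) =
     (if x = 0 then word_bar M (word_plus a) @ comp_aux M a False xs
      else word_bar M a @ comp_aux M a True xs)"
| "comp_aux M a False (x # xs) =
     (if x = 0 then a @ comp_aux M a False xs
      else word_plus a @ comp_aux M a True xs)"

definition compose :: "nat \<Rightarrow> word \<Rightarrow> word \<Rightarrow> word" where
  "compose M a d = word_plus a @ comp_aux M a True (tl d)"

definition irreducible_word :: "nat \<Rightarrow> word \<Rightarrow> bool" where
  "irreducible_word M a \<longleftrightarrow> fundamental M a \<and>
     \<not> (\<exists>c d. fundamental M c \<and> fundamental 1 d \<and> a = compose M c d)"

end

theory Submission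
  imports Defs
begin

definition eqb :: "nat \<Rightarrow> seq \<Rightarrow> seq \<Rightarrow> bool" where
  "eqb n x y \<longleftrightarrow> (\<forall>i<n. x i = y i)"
definition ltn :: "nat \<Rightarrow> seq \<Rightarrow> seq \<Rightarrow> bool" where
  "ltn n x y \<longleftrightarrow> (\<exists>k<n. eqb k x y \<and> x k < y k)"
definition len :: "nat \<Rightarrow> seq \<Rightarrow> seq \<Rightarrow> bool" where
  "len n x y \<longleftrightarrow> ltn n x y \<or> eqb n x y"

lemma seq_less_alt: "seq_less x y \<longleftrightarrow> (\<exists>k. eqb k x y \<and> x k < y k)"
  by (simp add: seq_less_def eqb_def)

lemma eqb_sym: "eqb n x y = eqb n y x" by (auto simp: eqb_def)
lemma eqb_mono: "eqb n x y \<Longrightarrow> m \<le> n \<Longrightarrow> eqb m x y" by (auto simp: eqb_def)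
lemma eqb_trans: "eqb n x y \<Longrightarrow> eqb n y z \<Longrightarrow> eqb n x z" by (auto simp: eqb_def)

lemma first_diff:
  assumes "x \<noteq> y" shows "\<exists>k. eqb k x y \<and> x k \<noteq> y k"
proof -
  from assms obtain i where "x i \<noteq> y i" by auto
  hence ex: "\<exists>i. x i \<noteq> y i" by blast
  define k where "k = (LEAST i. x i \<noteq> y i)"
  have "x k \<noteq> y k" unfolding k_def by (rule LeastI_ex[OF ex])
  moreover have "eqb k x y" unfolding eqb_def k_def using not_less_Least by blast
  ultimately show ?thesis by blast
qed

lemma seq_less_irrefl: "\<not> seq_less x x" by (simp add: seq_less_def)

lemma seq_less_trans: assumes "seq_less x y" "seq_less y z" shows "seq_less x z"
proof -
  from assms(1) obtain k where k: "eqb k x y" "x k < y k" by (auto simp: seq_less_alt)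
  from assms(2) obtain l where l: "eqb l y z" "y l < z l" by (auto simp: seq_less_alt)
  show ?thesis
  proof (cases "k \<le> l")
    case True
    then have "eqb k x z" using k l by (auto simp: eqb_def)
    moreover have "x k < z k" using k l True by (cases "k = l") (auto simp: eqb_def)
    ultimately show ?thesis by (auto simp: seq_less_alt)
  next
    case False
    then have "eqb l x z" using k l by (auto simp: eqb_def)
    moreover have "x l < z l" using k l False by (auto simp: eqb_def)
    ultimately show ?thesis by (auto simp: seq_less_alt)
  qed
qed

lemma seq_less_asym: "seq_less x y \<Longrightarrow> \<not> seq_less y x"
  using seq_less_trans seq_less_irrefl by blast

lemma seq_less_total: "x \<noteq> y \<Longrightarrow> seq_less x y \<or> seq_less y x"
proof -
  assume "x \<noteq> y"
  then obtain k where "eqb k x y" "x k \<noteq> y k" using first_diff by blast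
  then show ?thesis by (auto simp: seq_less_alt eqb_sym intro: linorder_neqE_nat)
qed

lemma seq_le_trans: "seq_le x y \<Longrightarrow> seq_le y z \<Longrightarrow> seq_le x z"
  by (auto simp: seq_le_def intro: seq_less_trans)

lemma seq_le_antisym: "seq_le x y \<Longrightarrow> seq_le y x \<Longrightarrow> x = y"
  by (auto simp: seq_le_def dest: seq_less_asym)

lemma seq_le_refl: "seq_le x x" by (simp add: seq_le_def)

lemma not_less_le: "\<not> seq_less x y \<longleftrightarrow> seq_le y x"
proof
  assume "\<not> seq_less x y" thus "seq_le y x" using seq_less_total[of x y] by (auto simp: seq_le_def)
next
  assume "seq_le y x" thus "\<not> seq_less x y" using seq_less_asym seq_less_irrefl by (auto simp: seq_le_def)
qed

lemma le_less_trans: "seq_le x y \<Longrightarrow> seq_less y z \<Longrightarrow> seq_less x z"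
  by (auto simp: seq_le_def intro: seq_less_trans)
lemma less_le_trans: "seq_less x y \<Longrightarrow> seq_le y z \<Longrightarrow> seq_less x z"
  by (auto simp: seq_le_def intro: seq_less_trans)
lemma le_less_contra: "seq_le x y \<Longrightarrow> seq_less y x \<Longrightarrow> False"
  using le_less_trans seq_less_irrefl by blast

lemma ltn_transfer: "ltn n x y \<Longrightarrow> eqb n x x' \<Longrightarrow> eqb n y y' \<Longrightarrow> ltn n x' y'"
  by (auto simp: ltn_def eqb_def)
lemma eqb_transfer: "eqb n x y \<Longrightarrow> eqb n x x' \<Longrightarrow> eqb n y y' \<Longrightarrow> eqb n x' y'"
  by (auto simp: eqb_def)
lemma len_transfer: "len n x y \<Longrightarrow> eqb n x x' \<Longrightarrow> eqb n y y' \<Longrightarrow> len n x' y'"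
  unfolding len_def using ltn_transfer eqb_transfer by blast

lemma ltn_seq_less: "ltn n x y \<Longrightarrow> seq_less x y"
  by (auto simp: ltn_def seq_less_alt)

lemma ltn_seq_less': "ltn n x y \<Longrightarrow> eqb n x x' \<Longrightarrow> eqb n y y' \<Longrightarrow> seq_less x' y'"
  using ltn_transfer ltn_seq_less by blast

lemma seq_less_cases: "seq_less x y \<Longrightarrow> ltn n x y \<or> eqb n x y"
proof -
  assume "seq_less x y"
  then obtain k where k: "eqb k x y" "x k < y k" by (auto simp: seq_less_alt)
  show ?thesis
  proof (cases "k < n")
    case True thus ?thesis using k by (auto simp: ltn_def)
  next
    case False thus ?thesis using k by (auto simp: eqb_def)
  qed
qed

lemma seq_le_len: "seq_le x y \<Longrightarrow> len n x y"
  unfolding seq_le_def len_def using seq_less_cases by (auto simp: eqb_def)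

lemma ltn_not_len: "ltn n x y \<Longrightarrow> \<not> len n y x"
proof
  assume "ltn n x y" "len n y x"
  then obtain k where k: "k < n" "eqb k x y" "x k < y k" by (auto simp: ltn_def)
  from \<open>len n y x\<close> show False
  proof (unfold len_def, elim disjE)
    assume "ltn n y x"
    then obtain l where l: "l < n" "eqb l y x" "y l < x l" by (auto simp: ltn_def)
    show False using k l by (cases k l rule: linorder_cases) (auto simp: eqb_def)
  next
    assume "eqb n y x" thus False using k by (auto simp: eqb_def)
  qed
qed

lemma len_total: "len n x y \<or> ltn n y x"
proof (cases "eqb n x y")
  case True thus ?thesis by (simp add: len_def)
next
  case False
  then obtain i where i: "i < n" "x i \<noteq> y i" by (auto simp: eqb_def)
  hence ex: "\<exists>i. i < n \<and> x i \<noteq> y i" by blast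
  define k where "k = (LEAST i. i < n \<and> x i \<noteq> y i)"
  have k: "k < n" "x k \<noteq> y k" using LeastI_ex[OF ex] unfolding k_def by auto
  have "eqb k x y" unfolding eqb_def
  proof (intro allI impI)
    fix i assume "i < k"
    hence "\<not> (i < n \<and> x i \<noteq> y i)" unfolding k_def by (rule not_less_Least)
    thus "x i = y i" using \<open>i < k\<close> k(1) by simp
  qed
  thus ?thesis using k by (auto simp: len_def ltn_def eqb_sym intro: linorder_neqE_nat)
qed

lemma len_mono: "len n x y \<Longrightarrow> m \<le> n \<Longrightarrow> len m x y"
proof -
  assume "len n x y" "m \<le> n"
  show "len m x y"
  proof (cases "eqb m x y")
    case True thus ?thesis by (simp add: len_def)
  next
    case False
    from \<open>len n x y\<close> show ?thesis
    proof (unfold len_def, elim disjE)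
      assume "ltn n x y"
      then obtain k where k: "k < n" "eqb k x y" "x k < y k" by (auto simp: ltn_def)
      have "k < m" using False k \<open>m \<le> n\<close> by (metis eqb_mono not_le)
      thus "ltn m x y \<or> eqb m x y" using k by (auto simp: ltn_def)
    next
      assume "eqb n x y" thus "ltn m x y \<or> eqb m x y" using \<open>m \<le> n\<close> eqb_mono by blast
    qed
  qed
qed

lemma shift_shift[simp]: "shift a (shift b x) = shift (a + b) x"
  by (simp add: shift_def ac_simps)
lemma shift_0[simp]: "shift 0 x = x" by (simp add: shift_def)
lemma shift_app: "shift n x i = x (i + n)" by (simp add: shift_def)

lemma eqb_shift_less: "eqb n x y \<Longrightarrow> seq_less x y \<longleftrightarrow> seq_less (shift n x) (shift n y)"
proof
  assume e: "eqb n x y" and "seq_less x y"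
  then obtain k where k: "eqb k x y" "x k < y k" by (auto simp: seq_less_alt)
  have "k \<ge> n"
  proof (rule ccontr)
    assume "\<not> n \<le> k" hence "k < n" by simp
    with e k show False by (auto simp: eqb_def)
  qed
  hence "eqb (k - n) (shift n x) (shift n y)" "shift n x (k - n) < shift n y (k - n)"
    using k by (auto simp: eqb_def shift_def)
  thus "seq_less (shift n x) (shift n y)" by (auto simp: seq_less_alt)
next
  assume e: "eqb n x y" and "seq_less (shift n x) (shift n y)"
  then obtain k where k: "eqb k (shift n x) (shift n y)" "x (k + n) < y (k + n)"
    by (auto simp: seq_less_alt shift_def)
  have "eqb (k + n) x y" unfolding eqb_def
  proof (intro allI impI)
    fix i assume i: "i < k + n"
    show "x i = y i"
    proof (cases "i < n")
      case True thus ?thesis using e by (simp add: eqb_def)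
    next
      case False
      then have "i - n < k" using i by simp
      then have "shift n x (i - n) = shift n y (i - n)" using k(1) by (simp add: eqb_def)
      thus ?thesis using False by (simp add: shift_def)
    qed
  qed
  thus "seq_less x y" using k by (auto simp: seq_less_alt)
qed

lemma eqb_shift_eq: "eqb n x y \<Longrightarrow> x = y \<longleftrightarrow> shift n x = shift n y"
proof
  assume e: "eqb n x y" and s: "shift n x = shift n y"
  show "x = y"
  proof
    fix i show "x i = y i"
    proof (cases "i < n")
      case True thus ?thesis using e by (simp add: eqb_def)
    next
      case False
      then have "shift n x (i - n) = shift n y (i - n)" using s by simp
      thus ?thesis using False by (simp add: shift_def)
    qed
  qed
qed simp

lemma eqb_shift_le: "eqb n x y \<Longrightarrow> seq_le x y \<longleftrightarrow> seq_le (shift n x) (shift n y)"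
  unfolding seq_le_def using eqb_shift_less eqb_shift_eq by blast

lemma prepend_nth: "i < length u \<Longrightarrow> prepend u x i = u ! i" by (simp add: prepend_def)
lemma shift_prepend[simp]: "shift (length u) (prepend u x) = x"
  by (auto simp: shift_def prepend_def)
lemma length_pref[simp]: "length (pref x n) = n" by (simp add: pref_def)
lemma pref_nth[simp]: "i < n \<Longrightarrow> pref x n ! i = x i" by (simp add: pref_def)
lemma prepend_pref_shift: "prepend (pref x n) (shift n x) = x"
  by (auto simp: prepend_def shift_def)
lemma eqb_prepend_pad0: "eqb (length u) (prepend u x) (pad0 u)"
  by (simp add: eqb_def prepend_def pad0_def)
lemma eqb_prepend_pref: "eqb n x (prepend (pref x n) y)"
  by (simp add: eqb_def prepend_def)
lemma eqb_pref_pad0: "eqb n x (pad0 (pref x n))"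
  by (simp add: eqb_def pad0_def)
lemma eqb_prepend_prepend: "eqb (length u) (prepend u x) (prepend u y)"
  by (simp add: eqb_def prepend_def)

lemma word_less_ltn:
  assumes "length u = length v"
  shows "word_less u v \<longleftrightarrow> ltn (length u) (pad0 u) (pad0 v)"
proof
  assume "word_less u v"
  then obtain k where k: "eqb k (pad0 u) (pad0 v)" "pad0 u k < pad0 v k"
    by (auto simp: word_less_def seq_less_alt)
  have "k < length u" using k(2) assms by (auto simp: pad0_def split: if_splits)
  thus "ltn (length u) (pad0 u) (pad0 v)" using k by (auto simp: ltn_def)
qed (auto simp: word_less_def ltn_seq_less)

lemma word_le_len:
  assumes "length u = length v"
  shows "word_le u v \<longleftrightarrow> len (length u) (pad0 u) (pad0 v)"
proof -
  have "pad0 u = pad0 v \<longleftrightarrow> eqb (length u) (pad0 u) (pad0 v)"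
    using assms by (auto simp: eqb_def pad0_def fun_eq_iff)
  thus ?thesis using word_less_ltn[OF assms]
    by (simp add: word_le_def seq_le_def len_def word_less_def)
qed

lemma fund_nonempty: "fundamental M w \<Longrightarrow> w \<noteq> []"
  by (auto simp: fundamental_def)

lemma fund_letters: "fundamental M w \<Longrightarrow> x \<in> set w \<Longrightarrow> x \<le> M"
  by (auto simp: fundamental_def)

lemma per_nth: "per w i = w ! (i mod length w)" by (simp add: per_def)

lemma per_letters: "w \<noteq> [] \<Longrightarrow> (\<forall>x\<in>set w. x \<le> M) \<Longrightarrow> per w i \<le> M"
  by (simp add: per_def)

lemma per_periodic: "w \<noteq> [] \<Longrightarrow> m mod length w = 0 \<Longrightarrow> per w (t + m) = per w t"
  by (simp add: per_def mod_add_right_eq[symmetric])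

lemma shift_per_mod: "w \<noteq> [] \<Longrightarrow> shift n (per w) = shift (n mod length w) (per w)"
  by (auto simp: fun_eq_iff shift_def per_def mod_add_right_eq)

lemma shift_per_periodic: "w \<noteq> [] \<Longrightarrow> n mod length w = 0 \<Longrightarrow> shift n (per w) = per w"
  using shift_per_mod[of w n] by simp

lemma eqb_shift_per_drop: "i \<le> length w \<Longrightarrow> eqb (length w - i) (shift i (per w)) (pad0 (drop i w))"
  by (auto simp: eqb_def shift_def per_def pad0_def add.commute)

lemma eqb_per_take: "t \<le> length w \<Longrightarrow> eqb t (per w) (pad0 (take t w))"
  by (auto simp: eqb_def per_def pad0_def)

lemma seq_bar_app: "seq_bar M x i = M - x i" by (simp add: seq_bar_def)

lemma eqb_bar: "eqb n x y \<Longrightarrow> eqb n (seq_bar M x) (seq_bar M y)"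
  by (simp add: eqb_def seq_bar_def)

lemma pad0_bar: "eqb (length u) (pad0 (word_bar M u)) (seq_bar M (pad0 u))"
  by (simp add: eqb_def pad0_def word_bar_def seq_bar_def)

lemma shift_bar: "shift n (seq_bar M x) = seq_bar M (shift n x)"
  by (simp add: fun_eq_iff shift_def seq_bar_def)

lemma bar_bar: "(\<And>i. x i \<le> M) \<Longrightarrow> seq_bar M (seq_bar M x) = x"
  by (simp add: fun_eq_iff seq_bar_def)

lemma bar_less:
  assumes "\<And>i. x i \<le> M" "\<And>i. y i \<le> M" "seq_less x y"
  shows "seq_less (seq_bar M y) (seq_bar M x)"
proof -
  from assms(3) obtain k where k: "eqb k x y" "x k < y k" by (auto simp: seq_less_alt)
  have "eqb k (seq_bar M y) (seq_bar M x)" using k(1) by (simp add: eqb_def seq_bar_def)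
  moreover have "seq_bar M y k < seq_bar M x k" using k(2) assms(2)[of k] by (simp add: seq_bar_def)
  ultimately show ?thesis by (auto simp: seq_less_alt)
qed

lemma bar_le:
  assumes "\<And>i. x i \<le> M" "\<And>i. y i \<le> M" "seq_le x y"
  shows "seq_le (seq_bar M y) (seq_bar M x)"
  using assms bar_less by (auto simp: seq_le_def)

lemma fund_long:
  assumes "fundamental M w" "1 \<le> i" "i < length w"
  shows "word_le (word_bar M (take (length w - i) w)) (drop i w)"
        "word_less (drop i w) (take (length w - i) w)"
  using assms by (auto simp: fundamental_def)

lemma F1:
  assumes f: "fundamental M w" and n: "n mod length w \<noteq> 0"
  shows "seq_less (shift n (per w)) (per w)"
proof -
  have ne: "w \<noteq> []" using f fund_nonempty by blast
  define L where "L = length w"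
  define i where "i = n mod L"
  have i: "1 \<le> i" "i < L" using n ne unfolding i_def L_def by auto
  have wl: "word_less (drop i w) (take (L - i) w)" using fund_long(2)[OF f i[unfolded L_def]] by (simp add: L_def)
  have "ltn (L - i) (pad0 (drop i w)) (pad0 (take (L - i) w))"
    using wl word_less_ltn[of "drop i w" "take (L-i) w"] i by (simp add: L_def)
  moreover have "eqb (L - i) (pad0 (drop i w)) (shift i (per w))"
    using eqb_shift_per_drop[of i w] i by (simp add: L_def eqb_sym)
  moreover have "eqb (L - i) (pad0 (take (L - i) w)) (per w)"
    using eqb_per_take[of "L - i" w] by (simp add: L_def eqb_sym)
  ultimately have "seq_less (shift i (per w)) (per w)" by (rule ltn_seq_less')
  thus ?thesis using shift_per_mod[OF ne, of n] by (simp add: i_def L_def)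
qed

lemma F2_step:
  assumes f: "fundamental M w" and n: "n mod length w \<noteq> 0"
    and P: "eqb k (shift n (per w)) (seq_bar M (per w))" "shift n (per w) k < seq_bar M (per w) k"
  shows "\<exists>k'<k. \<exists>n'. eqb k' (shift n' (per w)) (seq_bar M (per w)) \<and> shift n' (per w) k' < seq_bar M (per w) k'"
proof -
  have ne: "w \<noteq> []" using f fund_nonempty by blast
  have lett: "\<And>t. per w t \<le> M" using per_letters[OF ne] fund_letters[OF f] by blast
  define x where "x = per w"
  define L where "L = length w"
  define i where "i = n mod L"
  have i: "1 \<le> i" "i < L" using n ne unfolding i_def L_def by auto
  have sn: "shift n x = shift i x" using shift_per_mod[OF ne, of n] by (simp add: x_def i_def L_def)
  have wl: "word_le (word_bar M (take (L - i) w)) (drop i w)" using fund_long(1)[OF f i[unfolded L_def]] by (simp add: L_def)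
  have "len (L - i) (pad0 (word_bar M (take (L - i) w))) (pad0 (drop i w))"
    using wl word_le_len[of "word_bar M (take (L - i) w)" "drop i w"] i by (simp add: L_def word_bar_def)
  moreover have "eqb (L - i) (pad0 (word_bar M (take (L - i) w))) (seq_bar M x)"
  proof -
    have "eqb (L - i) (pad0 (word_bar M (take (L - i) w))) (seq_bar M (pad0 (take (L - i) w)))"
      using pad0_bar[of "take (L - i) w" M] i by (simp add: L_def)
    moreover have "eqb (L - i) (seq_bar M (pad0 (take (L - i) w))) (seq_bar M x)"
      using eqb_bar[OF eqb_per_take[of "L - i" w]] by (simp add: L_def x_def eqb_sym)
    ultimately show ?thesis by (rule eqb_trans)
  qed
  moreover have "eqb (L - i) (pad0 (drop i w)) (shift n x)"
    using eqb_shift_per_drop[of i w] i sn by (simp add: L_def eqb_sym x_def)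
  ultimately have le: "len (L - i) (seq_bar M x) (shift n x)" by (rule len_transfer)
  have Pk: "eqb k (shift n x) (seq_bar M x)" "shift n x k < seq_bar M x k" using P by (simp_all add: x_def)
  have kL: "k \<ge> L - i"
  proof (rule ccontr)
    assume "\<not> L - i \<le> k"
    hence "ltn (L - i) (shift n x) (seq_bar M x)" using Pk unfolding ltn_def by (intro exI[of _ k]) auto
    thus False using le ltn_not_len by blast
  qed
  define k' where "k' = k - (L - i)"
  define y where "y = shift (L - i) x"
  have per0: "\<And>t. shift n x (t + (L - i)) = x t"
  proof -
    fix t
    have "(t + (L - i) + n) = t + (L - i + n)" by simp
    moreover have "(L - i + n) mod L = 0" using i unfolding i_def
      by (metis add.commute le_add_diff_inverse2 less_imp_le mod_add_left_eq mod_self)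
    ultimately show "shift n x (t + (L - i)) = x t"
      using per_periodic[OF ne, of "L - i + n" t] by (simp add: shift_def x_def L_def add.assoc)
  qed
  have ylett: "\<And>t. y t \<le> M" "\<And>t. x t \<le> M" using lett by (simp_all add: y_def x_def shift_def)
  have "eqb k' y (seq_bar M x)"
    unfolding eqb_def
  proof (intro allI impI)
    fix t assume "t < k'"
    hence "t + (L - i) < k" using kL by (simp add: k'_def)
    hence "shift n x (t + (L - i)) = seq_bar M x (t + (L - i))" using Pk(1) by (simp add: eqb_def)
    hence "x t = M - y t" using per0[of t] by (simp add: seq_bar_def y_def shift_def)
    thus "y t = seq_bar M x t" using ylett[of t] by (simp add: seq_bar_def)
  qed
  moreover have "y k' < seq_bar M x k'"
  proof -
    have "k' + (L - i) = k" using kL by (simp add: k'_def)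
    hence "shift n x (k' + (L - i)) < seq_bar M x (k' + (L - i))" using Pk(2) by simp
    hence "x k' < M - y k'" using per0[of k'] by (simp add: seq_bar_def y_def shift_def)
    thus ?thesis using ylett by (simp add: seq_bar_def)
  qed
  moreover have "k' < k" using i kL Pk(2) unfolding k'_def by (cases k) auto
  ultimately show ?thesis unfolding y_def x_def by blast
qed

lemma F2:
  assumes f: "fundamental M w"
  shows "seq_le (seq_bar M (per w)) (shift n (per w))"
proof -
  have ne: "w \<noteq> []" using f fund_nonempty by blast
  have lett: "\<And>t. per w t \<le> M" using per_letters[OF ne] fund_letters[OF f] by blast
  define x where "x = per w"
  have main: "\<forall>n. \<not> (eqb k (shift n x) (seq_bar M x) \<and> shift n x k < seq_bar M x k)" for k
  proof (induction k rule: less_induct)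
    case (less k)
    show ?case
    proof (intro allI notI)
      fix n assume P: "eqb k (shift n x) (seq_bar M x) \<and> shift n x k < seq_bar M x k"
      show False
      proof (cases "length w = 1")
        case True
        then obtain h where w: "w = [h]" by (cases w) auto
        have "M - h \<le> h" using f w by (auto simp: fundamental_def)
        thus False using P w by (simp add: x_def per_def shift_def seq_bar_def)
      next
        case False
        hence L2: "length w \<ge> 2" using ne by (cases w) (auto simp: Suc_le_eq)
        show False
        proof (cases "n mod length w = 0")
          case False
          then show False using F2_step[OF f False] P less.IH unfolding x_def by blast
        next
          case True
          hence sx: "shift n x = x" using shift_per_periodic[OF ne] by (simp add: x_def)
          have "1 mod length w \<noteq> 0" using L2 by simp
          hence "seq_less (shift 1 x) x" using F1[OF f] by (simp add: x_def)
          then obtain t where t: "eqb t (shift 1 x) x" "shift 1 x t < x t" by (auto simp: seq_less_alt)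
          show False
          proof (cases "t < k")
            case True
            have "eqb t (shift 1 x) (seq_bar M x)"
              using t(1) P sx True by (auto simp: eqb_def)
            moreover have "shift 1 x t < seq_bar M x t"
              using t(2) P sx True by (auto simp: eqb_def)
            ultimately show False using less.IH[OF True] by blast
          next
            case False
            have e: "eqb k (shift 1 x) (seq_bar M x)"
              using t(1) P sx False by (auto simp: eqb_def)
            have "shift 1 x k \<le> x k" using t False
              by (cases "t = k") (auto simp: eqb_def)
            hence "shift 1 x k < seq_bar M x k" using P sx by simp
            then show False using F2_step[OF f \<open>1 mod length w \<noteq> 0\<close>] e less.IH unfolding x_def by blast
          qed
        qed
      qed
    qed
  qed
  have "\<not> seq_less (shift n x) (seq_bar M x)"
    using main by (auto simp: seq_less_alt)
  thus ?thesis by (simp add: not_less_le x_def)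
qed

lemma F3:
  assumes f: "fundamental M w"
  shows "in_V M (per w)"
proof -
  have ne: "w \<noteq> []" using f fund_nonempty by blast
  have lett: "\<And>t. per w t \<le> M" using per_letters[OF ne] fund_letters[OF f] by blast
  have "seq_le (shift n (per w)) (per w)" for n
  proof (cases "n mod length w = 0")
    case True thus ?thesis using shift_per_periodic[OF ne] by (simp add: seq_le_def)
  next
    case False thus ?thesis using F1[OF f False] by (simp add: seq_le_def)
  qed
  thus ?thesis using F2[OF f] lett by (simp add: in_V_def in_Omega_def)
qed

lemma length_word_plus[simp]: "c \<noteq> [] \<Longrightarrow> length (word_plus c) = length c"
  by (cases c rule: rev_cases) (auto simp: word_plus_def)
lemma length_word_minus[simp]: "c \<noteq> [] \<Longrightarrow> length (word_minus c) = length c"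
  by (cases c rule: rev_cases) (auto simp: word_minus_def)
lemma length_word_bar[simp]: "length (word_bar M c) = length c"
  by (simp add: word_bar_def)
lemma word_plus_ne[simp]: "word_plus c \<noteq> []" by (simp add: word_plus_def)
lemma word_bar_ne[simp]: "word_bar M c = [] \<longleftrightarrow> c = []" by (simp add: word_bar_def)
lemma word_bar_nth: "i < length c \<Longrightarrow> word_bar M c ! i = M - c ! i"
  by (simp add: word_bar_def)
lemma word_plus_nth: "i < length c \<Longrightarrow> word_plus c ! i = (if i = length c - 1 then c ! i + 1 else c ! i)"
  by (cases c rule: rev_cases) (auto simp: word_plus_def nth_append)
lemma word_minus_nth: "i < length c \<Longrightarrow> word_minus c ! i = (if i = length c - 1 then c ! i - 1 else c ! i)"
  by (cases c rule: rev_cases) (auto simp: word_minus_def nth_append)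
lemma word_minus_plus[simp]: "c \<noteq> [] \<Longrightarrow> word_minus (word_plus c) = c"
  by (cases c rule: rev_cases) (auto simp: word_plus_def word_minus_def)
lemma word_plus_minus: "c \<noteq> [] \<Longrightarrow> last c > 0 \<Longrightarrow> word_plus (word_minus c) = c"
  by (cases c rule: rev_cases) (auto simp: word_plus_def word_minus_def)
lemma last_nth': "c \<noteq> [] \<Longrightarrow> last c = c ! (length c - 1)"
  by (simp add: last_conv_nth)

lemma prepend_append: "prepend (u @ v) y = prepend u (prepend v y)"
  by (auto simp: fun_eq_iff prepend_def nth_append)

lemma prepend_per: "w \<noteq> [] \<Longrightarrow> prepend w (per w) = per w"
proof -
  assume ne: "w \<noteq> []"
  show ?thesis
  proof
    fix i show "prepend w (per w) i = per w i"
    proof (cases "i < length w")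
      case True thus ?thesis by (simp add: prepend_def per_def)
    next
      case False
      hence "i mod length w = (i - length w) mod length w"
        by (simp add: le_mod_geq)
      thus ?thesis using False by (simp add: prepend_def per_def)
    qed
  qed
qed

lemma blk_lt1:
  assumes "c \<noteq> []"
  shows "ltn (length c) (pad0 c) (pad0 (word_plus c))"
  unfolding ltn_def using assms
  by (intro exI[of _ "length c - 1"]) (auto simp: eqb_def pad0_def word_plus_nth)

lemma blk_lt2:
  assumes "c \<noteq> []" "last c < M"
  shows "ltn (length c) (pad0 (word_bar M (word_plus c))) (pad0 (word_bar M c))"
  unfolding ltn_def using assms
  by (intro exI[of _ "length c - 1"]) (auto simp: eqb_def pad0_def word_plus_nth word_bar_nth last_nth')

lemma ltn_prepend:
  assumes "ltn (length u) (pad0 u) (pad0 v)" "length u = length v"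
  shows "seq_less (prepend u x) (prepend v y)"
  using assms eqb_prepend_pad0[of u x] eqb_prepend_pad0[of v y]
  by (metis eqb_sym ltn_seq_less')

lemma comp_less:
  assumes ne: "c \<noteq> []" and lc: "last c < M" and z: "0 \<in> set xs"
  shows "seq_less (prepend (comp_aux M c True xs) y) (per (word_bar M c))"
  using z
proof (induction xs arbitrary: y)
  case Nil thus ?case by simp
next
  case (Cons x xs)
  have nb: "word_bar M c \<noteq> []" using ne by (simp add: word_bar_def)
  show ?case
  proof (cases "x = 0")
    case True
    have "seq_less (prepend (word_bar M (word_plus c)) (prepend (comp_aux M c False xs) y))
                   (prepend (word_bar M c) (per (word_bar M c)))"
      using blk_lt2[OF ne lc] ne by (intro ltn_prepend) auto
    thus ?thesis using True prepend_per[OF nb] by (simp add: prepend_append)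
  next
    case False
    hence z: "0 \<in> set xs" using Cons.prems by auto
    have e: "eqb (length c) (prepend (word_bar M c) (prepend (comp_aux M c True xs) y))
                            (prepend (word_bar M c) (per (word_bar M c)))"
      using eqb_prepend_prepend[of "word_bar M c"] by simp
    have "seq_less (prepend (word_bar M c) (prepend (comp_aux M c True xs) y))
                            (prepend (word_bar M c) (per (word_bar M c)))"
      using eqb_shift_less[OF e] Cons.IH[OF z] shift_prepend[of "word_bar M c"] by simp
    thus ?thesis using False prepend_per[OF nb] by (simp add: prepend_append)
  qed
qed

lemma fund1_zero:
  assumes "fundamental 1 d" shows "0 \<in> set (tl d)"
proof -
  have L: "length d \<ge> 2" using assms by (auto simp: fundamental_def)
  have "word_less (drop 1 d) (take (length d - 1) d)" using fund_long(2)[OF assms, of 1] L by simp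
  hence "ltn (length d - 1) (pad0 (drop 1 d)) (pad0 (take (length d - 1) d))"
    using word_less_ltn[of "drop 1 d" "take (length d - 1) d"] by simp
  then obtain k where k: "k < length d - 1" "pad0 (drop 1 d) k < pad0 (take (length d - 1) d) k"
    by (auto simp: ltn_def)
  have "d ! k \<le> 1" using fund_letters[OF assms, of "d ! k"] k(1) by simp
  hence "drop 1 d ! k = 0" using k by (simp add: pad0_def)
  hence "0 \<in> set (drop 1 d)" using k(1) by (metis length_drop nth_mem)
  thus ?thesis by (simp add: drop_Suc)
qed

lemma forward:
  assumes M: "M \<ge> 1" and fa: "fundamental M a" and irr: "irreducible_seq M (per a)"
  shows "irreducible_word M a"
proof -
  have "False" if fc: "fundamental M c" and fd: "fundamental 1 d" and ac: "a = compose M c d" for c d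
  proof -
    have nc: "c \<noteq> []" using fc fund_nonempty by blast
    define j where "j = length c"
    define cp where "cp = word_plus c"
    define rest where "rest = comp_aux M c True (tl d)"
    have a: "a = cp @ rest" using ac by (simp add: compose_def cp_def rest_def)
    have j1: "j \<ge> 1" using nc by (simp add: j_def Suc_le_eq)
    have lcp: "length cp = j" using nc by (simp add: cp_def j_def)
    have pr: "pref (per a) j = cp"
    proof (rule nth_equalityI)
      show "length (pref (per a) j) = length cp" using lcp by simp
      fix i assume "i < length (pref (per a) j)"
      hence i: "i < j" by simp
      hence "i < length a" using a lcp by simp
      thus "pref (per a) j ! i = cp ! i" using i a lcp by (simp add: per_def nth_append)
    qed
    have lastcp: "cp ! (j - 1) = last c + 1" using nc by (simp add: cp_def j_def word_plus_nth last_nth')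
    have jl: "j - 1 < length cp" using lcp j1 by simp
    have "a ! (j - 1) = last c + 1" using a jl lastcp by (simp add: nth_append)
    moreover have "j - 1 < length a" using a jl by simp
    ultimately have "last c + 1 \<in> set a" by (metis nth_mem)
    hence lcM: "last c < M" using fund_letters[OF fa] by fastforce
    have "per a (j - 1) = pref (per a) j ! (j - 1)" using j1 by simp
    hence pos: "per a (j - 1) > 0" using pr lastcp by simp
    have V: "in_V M (per (word_minus (pref (per a) j)))" using pr F3[OF fc] nc by (simp add: cp_def)
    have wp: "word_plus (word_bar M cp) = word_bar M c"
    proof (rule nth_equalityI)
      show "length (word_plus (word_bar M cp)) = length (word_bar M c)" using nc by (simp add: cp_def)
      fix i assume "i < length (word_plus (word_bar M cp))"
      hence i: "i < length c" using nc by (simp add: cp_def)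
      show "word_plus (word_bar M cp) ! i = word_bar M c ! i"
        using i lcM nc by (auto simp: cp_def word_plus_nth word_bar_nth last_nth')
    qed
    have concl: "seq_less (prepend cp (per (word_bar M c))) (per a)"
      using irr j1 pos V pr wp unfolding irreducible_seq_def by auto
    have na: "a \<noteq> []" using a nc by (simp add: cp_def)
    have pa: "per a = prepend cp (prepend rest (per a))"
      using prepend_per[OF na] a by (simp add: prepend_append)
    have "eqb j (prepend cp (prepend rest (per a))) (prepend cp (per (word_bar M c)))"
      using eqb_prepend_prepend[of cp] lcp by metis
    hence e: "eqb j (per a) (prepend cp (per (word_bar M c)))" by (simp add: pa[symmetric])
    have sh: "shift j (per a) = prepend rest (per a)"
    proof -
      have "shift j (prepend cp (prepend rest (per a))) = prepend rest (per a)" using lcp shift_prepend by metis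
      thus ?thesis by (simp add: pa[symmetric])
    qed
    have sh2: "shift j (prepend cp (per (word_bar M c))) = per (word_bar M c)" using lcp shift_prepend by metis
    have "seq_less (prepend rest (per a)) (per (word_bar M c))"
      unfolding rest_def by (rule comp_less[OF nc lcM fund1_zero[OF fd]])
    hence "seq_less (per a) (prepend cp (per (word_bar M c)))"
      using eqb_shift_less[OF e] sh sh2 by simp
    thus False using concl seq_less_asym by blast
  qed
  thus ?thesis using fa unfolding irreducible_word_def by blast
qed

definition emit :: "nat \<Rightarrow> word \<Rightarrow> bool \<Rightarrow> bool \<Rightarrow> word" where
  "emit M c s b = (if s then (if b then word_bar M c else word_bar M (word_plus c))
                   else (if b then word_plus c else c))"

definition Phi :: "nat \<Rightarrow> word \<Rightarrow> bool \<Rightarrow> (nat \<Rightarrow> bool) \<Rightarrow> seq" where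
  "Phi M c s x p = emit M c (if p div length c = 0 then s else x (p div length c - 1))
                     (x (p div length c)) ! (p mod length c)"

definition bn :: "(nat \<Rightarrow> bool) \<Rightarrow> seq" where
  "bn x = (\<lambda>i. if x i then 1 else 0)"

lemma bn_inj: "bn x = bn y \<Longrightarrow> x = y"
  by (auto simp: bn_def fun_eq_iff split: if_splits)

lemma bn_shift: "shift m (bn x) = bn (\<lambda>i. x (i + m))"
  by (simp add: bn_def shift_def)

lemma bn_not: "bn (\<lambda>i. \<not> x i) = seq_bar 1 (bn x)"
  by (simp add: bn_def seq_bar_def fun_eq_iff)

lemma length_emit[simp]: "c \<noteq> [] \<Longrightarrow> length (emit M c s b) = length c"
  by (simp add: emit_def)

lemma comp_aux_cons: "comp_aux M c s (x # xs) = emit M c s (x \<noteq> 0) @ comp_aux M c (x \<noteq> 0) xs"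
  by (cases s) (simp_all add: emit_def)

lemma Phi_shift:
  assumes "c \<noteq> []"
  shows "shift (m * length c) (Phi M c s x) = Phi M c (if m = 0 then s else x (m - 1)) (\<lambda>i. x (i + m))"
proof
  fix p
  define j where "j = length c"
  have j: "j > 0" using assms by (simp add: j_def)
  have d: "(p + m * j) div j = p div j + m" using j by simp
  have md: "(p + m * j) mod j = p mod j" using j by simp
  show "shift (m * length c) (Phi M c s x) p = Phi M c (if m = 0 then s else x (m - 1)) (\<lambda>i. x (i + m)) p"
    unfolding shift_def Phi_def j_def[symmetric] d md
    by (cases "p div j = 0"; cases m) (auto simp: add.commute)
qed

lemma Phi_nth_block:
  assumes "c \<noteq> []" "r < length c"
  shows "Phi M c s x (m * length c + r) = emit M c (if m = 0 then s else x (m - 1)) (x m) ! r"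
  using assms by (simp add: Phi_def)

lemma bar_bar_word: "(\<forall>x\<in>set u. x \<le> M) \<Longrightarrow> word_bar M (word_bar M u) = u"
  by (induction u) (auto simp: word_bar_def)

lemma Phi_bar:
  assumes ne: "c \<noteq> []" and lc: "\<forall>x\<in>set (word_plus c). x \<le> M" "\<forall>x\<in>set c. x \<le> M"
  shows "seq_bar M (Phi M c False x) = Phi M c True (\<lambda>i. \<not> x i)"
proof
  fix p
  define j where "j = length c"
  have j: "j > 0" using ne by (simp add: j_def)
  have pm: "p mod j < length (emit M c s b)" for s b using j ne by (simp add: j_def)
  have e1: "M - emit M c s b ! (p mod j) = emit M c (\<not> s) (\<not> b) ! (p mod j)" for s b
  proof -
    have "M - emit M c s b ! (p mod j) = word_bar M (emit M c s b) ! (p mod j)"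
      using pm by (simp add: word_bar_nth)
    also have "word_bar M (emit M c s b) = emit M c (\<not> s) (\<not> b)"
      using lc bar_bar_word by (auto simp: emit_def)
    finally show ?thesis .
  qed
  show "seq_bar M (Phi M c False x) p = Phi M c True (\<lambda>i. \<not> x i) p"
    unfolding seq_bar_def Phi_def j_def[symmetric] using e1 by (cases "p div j = 0") auto
qed

lemma emit_agree:
  assumes ne: "c \<noteq> []" and r: "r < length c - 1"
  shows "emit M c s False ! r = emit M c s True ! r"
  using assms by (auto simp: emit_def word_bar_nth word_plus_nth)

lemma emit_last:
  assumes ne: "c \<noteq> []" and lc: "last c < M"
  shows "emit M c s False ! (length c - 1) < emit M c s True ! (length c - 1)"
  using assms by (auto simp: emit_def word_bar_nth word_plus_nth last_nth')

lemma Phi_mono: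
  assumes ne: "c \<noteq> []" and lc: "last c < M" and lt: "seq_less (bn x) (bn y)"
  shows "seq_less (Phi M c s x) (Phi M c s y)"
proof -
  define j where "j = length c"
  have j: "j > 0" using ne by (simp add: j_def)
  from lt obtain n where n: "eqb n (bn x) (bn y)" "bn x n < bn y n" by (auto simp: seq_less_alt)
  have xy: "\<And>i. i < n \<Longrightarrow> x i = y i" using n(1) by (auto simp: eqb_def bn_def split: if_splits)
  have xn: "\<not> x n" "y n" using n(2) by (auto simp: bn_def split: if_splits)
  define q where "q = n * j + (j - 1)"
  have st: "(if m = 0 then s else x (m - 1)) = (if m = 0 then s else y (m - 1))" if "m \<le> n" for m
    using that xy by auto
  have "eqb q (Phi M c s x) (Phi M c s y)"
    unfolding eqb_def
  proof (intro allI impI)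
    fix p assume p: "p < q"
    have pd: "p = (p div j) * j + p mod j" by simp
    have pmj: "p mod j < j" using j by simp
    have "p < (n + 1) * j" using p j unfolding q_def by simp
    hence "p div j < n + 1" by (rule less_mult_imp_div_less)
    hence "p div j \<le> n" by simp
    show "Phi M c s x p = Phi M c s y p"
    proof (cases "p div j < n")
      case True
      have "x (p div j - 1) = y (p div j - 1)" using xy True by simp
      thus ?thesis using xy[OF True] by (simp add: Phi_def j_def[symmetric])
    next
      case False
      hence pdn: "p div j = n" using \<open>p div j \<le> n\<close> by simp
      have "n * j + p mod j < n * j + (j - 1)" using p pd pdn unfolding q_def by simp
      hence "p mod j < j - 1" by simp
      moreover have "n > 0 \<Longrightarrow> x (n - 1) = y (n - 1)" using xy by simp
      ultimately show ?thesis using pdn xn emit_agree[OF ne] by (simp add: Phi_def j_def[symmetric])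
    qed
  qed
  moreover have "Phi M c s x q < Phi M c s y q"
  proof -
    have jl: "j - 1 < length c" using j by (simp add: j_def)
    have "n > 0 \<Longrightarrow> x (n - 1) = y (n - 1)" using xy by simp
    hence "(if n = 0 then s else x (n - 1)) = (if n = 0 then s else y (n - 1))" by simp
    thus ?thesis unfolding q_def j_def Phi_nth_block[OF ne jl[unfolded j_def]]
      using xn emit_last[OF ne lc] by simp
  qed
  ultimately show ?thesis by (auto simp: seq_less_alt)
qed

lemma Phi_mono_rev:
  assumes ne: "c \<noteq> []" and lc: "last c < M" and le: "seq_le (Phi M c s x) (Phi M c s y)"
  shows "seq_le (bn x) (bn y)"
proof (rule ccontr)
  assume "\<not> seq_le (bn x) (bn y)"
  hence "seq_less (bn y) (bn x)" using not_less_le by blast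
  hence "seq_less (Phi M c s y) (Phi M c s x)" by (rule Phi_mono[OF ne lc])
  thus False using le le_less_contra by blast
qed

definition labf :: "word \<Rightarrow> word \<Rightarrow> bool \<Rightarrow> word \<Rightarrow> bool" where
  "labf cp bc s u = (if s then u = bc else u = cp)"

primrec stf :: "word \<Rightarrow> word \<Rightarrow> (nat \<Rightarrow> word) \<Rightarrow> nat \<Rightarrow> bool" where
  "stf cp bc B 0 = False"
| "stf cp bc B (Suc m) = labf cp bc (stf cp bc B m) (B m)"

lemma between:
  assumes n: "n \<ge> 1" and l1: "len n x y" and l2: "len n y z" and e: "eqb (n - 1) x z"
    and z: "z (n - 1) = x (n - 1) + 1"
  shows "eqb n y x \<or> eqb n y z"
proof -
  have l1': "len (n - 1) x y" and l2': "len (n - 1) y z" using l1 l2 len_mono by auto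
  have exy: "eqb (n - 1) x y"
  proof -
    have "\<not> ltn (n - 1) x y"
    proof
      assume "ltn (n - 1) x y"
      hence "ltn (n - 1) z y" using e ltn_transfer[of "n - 1" x y z y] by (simp add: eqb_def)
      thus False using l2' ltn_not_len by blast
    qed
    thus ?thesis using l1' by (simp add: len_def)
  qed
  have le1: "x (n - 1) \<le> y (n - 1)"
  proof (cases "ltn n x y")
    case True
    then obtain k where k: "k < n" "eqb k x y" "x k < y k" by (auto simp: ltn_def)
    have "\<not> k < n - 1" using k exy by (auto simp: eqb_def)
    hence "k = n - 1" using k by simp
    thus ?thesis using k by simp
  next
    case False thus ?thesis using l1 n by (auto simp: len_def eqb_def)
  qed
  have le2: "y (n - 1) \<le> z (n - 1)"
  proof (cases "ltn n y z")
    case True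
    then obtain k where k: "k < n" "eqb k y z" "y k < z k" by (auto simp: ltn_def)
    have eyz: "eqb (n - 1) y z" using exy e by (auto simp: eqb_def)
    have "\<not> k < n - 1" using k eyz by (auto simp: eqb_def)
    hence "k = n - 1" using k by simp
    thus ?thesis using k by simp
  next
    case False thus ?thesis using l2 n by (auto simp: len_def eqb_def)
  qed
  have "y (n - 1) = x (n - 1) \<or> y (n - 1) = z (n - 1)" using le1 le2 z by linarith
  thus ?thesis
  proof
    assume h: "y (n - 1) = x (n - 1)"
    show ?thesis
    proof (rule disjI1, unfold eqb_def, intro allI impI)
      fix i assume "i < n"
      thus "y i = x i" using h exy by (cases "i = n - 1") (auto simp: eqb_def)
    qed
  next
    assume h: "y (n - 1) = z (n - 1)"
    show ?thesis
    proof (rule disjI2, unfold eqb_def, intro allI impI)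
      fix i assume "i < n"
      thus "y i = z i" using h exy e by (cases "i = n - 1") (auto simp: eqb_def)
    qed
  qed
qed

lemma pad0_drop_nth: "t < length u - i \<Longrightarrow> pad0 (drop i u) t = u ! (i + t)"
  by (simp add: pad0_def)
lemma pad0_take_nth: "t < n \<Longrightarrow> n \<le> length u \<Longrightarrow> pad0 (take n u) t = u ! t"
  by (simp add: pad0_def)
lemma pad0_nth: "t < length u \<Longrightarrow> pad0 u t = u ! t"
  by (simp add: pad0_def)

lemma ltn_eqb_False: "ltn n x y \<Longrightarrow> eqb n x y \<Longrightarrow> False"
  by (auto simp: ltn_def eqb_def)

locale bw =
  fixes M :: nat and a :: word and j :: nat
  assumes M1: "M \<ge> 1" and fa: "fundamental M a" and j1: "j \<ge> 1"
    and pos: "per a (j - 1) > 0"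
    and CV: "in_V M (per (word_minus (pref (per a) j)))"
    and up: "seq_le (per a) (prepend (pref (per a) j) (per (word_bar M (word_minus (pref (per a) j)))))"
begin

definition "A = per a"
definition "cp = pref A j"
definition "c = word_minus cp"
definition "C = per c"
definition "bc = word_bar M c"
definition "bcp = word_bar M cp"
definition "L = length a"

lemma na: "a \<noteq> []" using fa fund_nonempty by blast
lemma L1: "L \<ge> 1" using na by (simp add: L_def Suc_le_eq)
lemma AV: "in_V M A" using F3[OF fa] by (simp add: A_def)
lemma Alet: "A i \<le> M" using AV by (simp add: in_V_def in_Omega_def)
lemma A_le: "seq_le (shift n A) A" using AV by (simp add: in_V_def)
lemma A_ge: "seq_le (seq_bar M A) (shift n A)" using AV by (simp add: in_V_def)
lemma A_shift_mod: "shift n A = shift (n mod L) A"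
  using shift_per_mod[OF na] by (simp add: A_def L_def)
lemma A_less: "n mod L \<noteq> 0 \<Longrightarrow> seq_less (shift n A) A"
  using F1[OF fa] by (simp add: A_def L_def)

lemma cp_len[simp]: "length cp = j" by (simp add: cp_def)
lemma cp_ne: "cp \<noteq> []"
proof
  assume "cp = []" hence "length cp = 0" by simp
  thus False using j1 by simp
qed
lemma cp_nth: "i < j \<Longrightarrow> cp ! i = A i" by (simp add: cp_def)
lemma c_len[simp]: "length c = j" using cp_ne by (simp add: c_def)
lemma c_ne: "c \<noteq> []" using c_len j1 by (metis list.size(3) not_one_le_zero)
lemma j_pos: "j > 0" using j1 by simp
lemma Aj: "A (j - 1) > 0" using pos by (simp add: A_def)
lemma c_nth: "i < j \<Longrightarrow> c ! i = (if i = j - 1 then A i - 1 else A i)"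
  using cp_ne by (simp add: c_def word_minus_nth cp_nth)
lemma cp_c: "i < j \<Longrightarrow> cp ! i = (if i = j - 1 then c ! i + 1 else c ! i)"
  using Aj by (auto simp: c_nth cp_nth)
lemma cp_plus: "cp = word_plus c"
proof -
  have "last cp > 0" using Aj cp_ne j1 by (simp add: last_nth' cp_nth)
  thus ?thesis using word_plus_minus[OF cp_ne] by (simp add: c_def)
qed
lemma c_let: "i < j \<Longrightarrow> c ! i \<le> M"
proof -
  assume "i < j"
  hence "c ! i \<le> A i" by (simp add: c_nth)
  thus ?thesis using Alet[of i] by linarith
qed
lemma cp_let: "i < j \<Longrightarrow> cp ! i \<le> M" using Alet by (simp add: cp_nth)
lemma c_lets: "\<forall>x\<in>set c. x \<le> M" using c_let by (auto simp: in_set_conv_nth)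
lemma cp_lets: "\<forall>x\<in>set cp. x \<le> M" using cp_let by (auto simp: in_set_conv_nth)
lemma last_c: "last c < M"
proof -
  have "last c = c ! (j - 1)" using c_ne by (simp add: last_nth')
  also have "\<dots> = A (j - 1) - 1" using j1 by (simp add: c_nth)
  also have "\<dots> < M" using Aj Alet[of "j - 1"] by simp
  finally show ?thesis .
qed
lemma CV': "in_V M C" using CV by (simp add: C_def c_def cp_def A_def)
lemma C_nth: "i < j \<Longrightarrow> C i = c ! i" by (simp add: C_def per_def)
lemma up': "seq_le A (prepend cp (per bc))"
  using up by (simp add: A_def cp_def c_def bc_def)

lemma c_fund: "fundamental M c"
proof (cases "j = 1")
  case True
  then obtain h where ch: "c = [h]" using c_len by (cases c) auto
  have h: "h = A 0 - 1" using ch c_nth[of 0] True by simp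
  have hM: "h < M" using last_c ch by simp
  have "seq_le (seq_bar M C) C" using CV' by (simp add: in_V_def) (metis shift_0)
  hence "len 1 (seq_bar M C) C" by (rule seq_le_len)
  hence "M - h \<le> h" using ch by (auto simp: len_def ltn_def eqb_def seq_bar_def C_def per_def)
  moreover have "M \<ge> 2" using hM \<open>M - h \<le> h\<close> by linarith
  ultimately show ?thesis using ch hM by (simp add: fundamental_def)
next
  case False
  hence j2: "j \<ge> 2" using j1 by simp
  have "word_le (word_bar M (take (j - i) c)) (drop i c) \<and> word_less (drop i c) (take (j - i) c)"
    if i: "1 \<le> i" "i < j" for i
  proof
    have "seq_le (seq_bar M C) (shift i C)" using CV' by (simp add: in_V_def)
    hence l: "len (j - i) (seq_bar M C) (shift i C)" by (rule seq_le_len)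
    have e1: "eqb (j - i) (seq_bar M C) (pad0 (word_bar M (take (j - i) c)))"
      using i by (auto simp: eqb_def seq_bar_def pad0_def word_bar_nth C_nth)
    have e2: "eqb (j - i) (shift i C) (pad0 (drop i c))"
      using i by (auto simp: eqb_def shift_def pad0_def C_nth add.commute)
    have "len (j - i) (pad0 (word_bar M (take (j - i) c))) (pad0 (drop i c))"
      using len_transfer[OF l e1 e2] .
    thus "word_le (word_bar M (take (j - i) c)) (drop i c)"
      using word_le_len[of "word_bar M (take (j - i) c)" "drop i c"] i by simp
  next
    have "seq_le (shift i C) C" using CV' by (simp add: in_V_def)
    hence l: "len (j - i) (shift i C) C" by (rule seq_le_len)
    have e2: "eqb (j - i) (shift i C) (pad0 (drop i c))"
      using i by (auto simp: eqb_def shift_def pad0_def C_nth add.commute)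
    have e1: "eqb (j - i) C (pad0 (take (j - i) c))"
      using i by (auto simp: eqb_def pad0_def C_nth)
    have l2: "len (j - i) (pad0 (drop i c)) (pad0 (take (j - i) c))"
      using len_transfer[OF l e2 e1] .
    have "ltn (j - i) (pad0 (drop i c)) (pad0 (take (j - i) c))"
    proof (rule ccontr)
      assume "\<not> ltn (j - i) (pad0 (drop i c)) (pad0 (take (j - i) c))"
      hence eq: "eqb (j - i) (pad0 (drop i c)) (pad0 (take (j - i) c))" using l2 by (simp add: len_def)
      have eqc: "c ! (i + t) = c ! t" if "t < j - i" for t
        using eq that by (auto simp: eqb_def pad0_def)
      have "ltn (j - i) A (shift i A)"
        unfolding ltn_def
      proof (intro exI[of _ "j - i - 1"] conjI)
        show "j - i - 1 < j - i" using i by simp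
        show "eqb (j - i - 1) A (shift i A)"
          unfolding eqb_def
        proof (intro allI impI)
          fix t assume t: "t < j - i - 1"
          have "i + t \<noteq> j - 1" "i + t < j" using t i by auto
          hence "A (t + i) = c ! (i + t)" by (simp add: c_nth add.commute)
          also have "\<dots> = c ! t" using eqc t by simp
          also have "\<dots> = A t"
          proof -
            have "t \<noteq> j - 1" "t < j" using t i by auto
            thus ?thesis by (simp add: c_nth)
          qed
          finally show "A t = shift i A t" by (simp add: shift_def)
        qed
        have "A (j - 1) = c ! (j - 1) + 1" using Aj j1 by (simp add: c_nth)
        also have "c ! (j - 1) = c ! (i + (j - i - 1))" using i by simp
        also have "\<dots> = c ! (j - i - 1)" by (rule eqc) (use i in simp)
        also have "\<dots> = A (j - i - 1)"
        proof -
          have "j - i - 1 \<noteq> j - 1" "j - i - 1 < j" using i by auto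
          thus ?thesis by (simp add: c_nth)
        qed
        finally show "A (j - i - 1) < shift i A (j - i - 1)" using i by (simp add: shift_def)
      qed
      hence "seq_less A (shift i A)" by (rule ltn_seq_less)
      thus False using A_le le_less_contra by blast
    qed
    thus "word_less (drop i c) (take (j - i) c)"
      using word_less_ltn[of "drop i c" "take (j - i) c"] i by simp
  qed
  thus ?thesis using j2 c_lets by (simp add: fundamental_def)
qed

lemma K:
  assumes i: "1 \<le> i" "i < j" and h: "\<And>t. t < j - i \<Longrightarrow> cp ! (i + t) = M - c ! t"
  shows False
proof -
  have "word_le (word_bar M (take (j - i) c)) (drop i c)" using fund_long(1)[OF c_fund, of i] i by simp
  hence l: "len (j - i) (pad0 (word_bar M (take (j - i) c))) (pad0 (drop i c))"
    using word_le_len[of "word_bar M (take (j - i) c)" "drop i c"] i by simp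
  have "ltn (j - i) (pad0 (drop i c)) (pad0 (word_bar M (take (j - i) c)))"
    unfolding ltn_def
  proof (intro exI[of _ "j - i - 1"] conjI)
    show "j - i - 1 < j - i" using i by simp
    show "eqb (j - i - 1) (pad0 (drop i c)) (pad0 (word_bar M (take (j - i) c)))"
      unfolding eqb_def
    proof (intro allI impI)
      fix t assume t: "t < j - i - 1"
      have "c ! (i + t) = cp ! (i + t)" using t i by (simp add: cp_c)
      thus "pad0 (drop i c) t = pad0 (word_bar M (take (j - i) c)) t"
        using t i h[of t] by (simp add: pad0_def word_bar_nth)
    qed
    have "c ! (j - 1) < cp ! (j - 1)" using j1 by (simp add: cp_c)
    moreover have "i + (j - i - 1) = j - 1" using i by simp
    ultimately show "pad0 (drop i c) (j - i - 1) < pad0 (word_bar M (take (j - i) c)) (j - i - 1)"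
      using i h[of "j - i - 1"] by (simp add: pad0_def word_bar_nth)
  qed
  thus False using l ltn_not_len by blast
qed

lemma K2:
  assumes i: "1 \<le> i" "i < j" and h: "\<And>t. t < j - i \<Longrightarrow> c ! (i + t) = c ! t"
  shows False
proof -
  have "word_less (drop i c) (take (j - i) c)" using fund_long(2)[OF c_fund, of i] i by simp
  hence l: "ltn (j - i) (pad0 (drop i c)) (pad0 (take (j - i) c))"
    using word_less_ltn[of "drop i c" "take (j - i) c"] i by simp
  have "eqb (j - i) (pad0 (drop i c)) (pad0 (take (j - i) c))"
    using h i by (auto simp: eqb_def pad0_def)
  thus False using l ltn_eqb_False by blast
qed

lemma K3:
  assumes j2: "j \<ge> 2" and h: "\<And>i. i < j - 1 \<Longrightarrow> c ! i = M - c ! i"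
  shows False
proof -
  have f1: "word_le (word_bar M (take (j - 1) c)) (drop 1 c)" and f2: "word_less (drop 1 c) (take (j - 1) c)"
    using fund_long[OF c_fund, of 1] j2 by simp_all
  have "word_bar M (take (j - 1) c) = take (j - 1) c"
    using h by (intro nth_equalityI) (auto simp: word_bar_nth)
  hence f1': "word_le (take (j - 1) c) (drop 1 c)" using f1 by simp
  have "len (j - 1) (pad0 (take (j - 1) c)) (pad0 (drop 1 c))"
    using f1' word_le_len[of "take (j - 1) c" "drop 1 c"] j2 by simp
  moreover have "ltn (j - 1) (pad0 (drop 1 c)) (pad0 (take (j - 1) c))"
    using f2 word_less_ltn[of "drop 1 c" "take (j - 1) c"] j2 by simp
  ultimately show False using ltn_not_len by blast
qed

lemma cp_ne_bc: "cp \<noteq> bc"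
proof
  assume e: "cp = bc"
  show False
  proof (cases "j = 1")
    case True
    then obtain h where ch: "c = [h]" using c_len by (cases c) auto
    have hh: "M - h \<le> h" using c_fund ch by (simp add: fundamental_def)
    have z: "j - 1 = 0" using True by simp
    have "cp ! 0 = c ! 0 + 1" using cp_c[of 0] j_pos z by simp
    moreover have "bc ! 0 = M - c ! 0" using j_pos by (simp add: bc_def word_bar_nth)
    ultimately have "cp ! 0 = h + 1" "bc ! 0 = M - h" using ch by simp_all
    with hh show False using e by simp
  next
    case False
    have "c ! i = M - c ! i" if "i < j - 1" for i
    proof -
      have "cp ! i = bc ! i" using e by simp
      thus ?thesis using that by (simp add: cp_c bc_def word_bar_nth)
    qed
    thus False using K3 False j1 by simp
  qed
qed

lemma cp_ne_bcp: "cp \<noteq> bcp"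
proof
  assume e: "cp = bcp"
  show False
  proof (cases "j = 1")
    case True
    then obtain h where ch: "c = [h]" using c_len by (cases c) auto
    have hh: "M - h \<le> h" using c_fund ch by (simp add: fundamental_def)
    have z: "j - 1 = 0" using True by simp
    have "cp ! 0 = c ! 0 + 1" using cp_c[of 0] j_pos z by simp
    moreover have "bcp ! 0 = M - cp ! 0" using j_pos by (simp add: bcp_def word_bar_nth)
    ultimately have "cp ! 0 = h + 1" "bcp ! 0 = M - (h + 1)" using ch by simp_all
    with hh show False using e by simp
  next
    case False
    have "c ! i = M - c ! i" if "i < j - 1" for i
    proof -
      have "cp ! i = bcp ! i" using e by simp
      thus ?thesis using that by (simp add: cp_c bcp_def word_bar_nth)
    qed
    thus False using K3 False j1 by simp
  qed
qed

lemma c_ne_bc: "j \<ge> 2 \<Longrightarrow> c \<noteq> bc"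
proof
  assume j2: "j \<ge> 2" and e: "c = bc"
  have "c ! i = M - c ! i" if "i < j - 1" for i
  proof -
    have "c ! i = bc ! i" using e by simp
    thus ?thesis using that by (simp add: bc_def word_bar_nth)
  qed
  thus False using K3 j2 by simp
qed

lemma c_ne_cp: "c \<noteq> cp"
proof
  assume "c = cp"
  hence "c ! (j - 1) = cp ! (j - 1)" by simp
  thus False using j1 by (simp add: cp_c)
qed

lemma bc_ne_bcp: "bc \<noteq> bcp"
proof
  assume "bc = bcp"
  hence "bc ! (j - 1) = bcp ! (j - 1)" by simp
  thus False using j1 last_c c_ne by (simp add: cp_c bc_def bcp_def word_bar_nth last_nth')
qed

end

context bw begin

definition "blk m = pref (shift (m * j) A) j"
definition "st = stf cp bc blk"
definition "lab m = labf cp bc (st m) (blk m)"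
definition "INV m \<longleftrightarrow> (st m \<longrightarrow> seq_le (shift (m * j) A) (per bc)) \<and> (\<not> st m \<longrightarrow> seq_le C (shift (m * j) A))"

lemma st_0: "\<not> st 0" by (simp add: st_def)
lemma st_Suc: "st (Suc m) = lab m" by (simp add: st_def lab_def)
lemma st_alt: "st m = (if m = 0 then False else lab (m - 1))"
  by (cases m) (simp_all add: st_0 st_Suc)

lemma bc_ne: "bc \<noteq> []" using c_ne by (simp add: bc_def)
lemma bc_len[simp]: "length bc = j" by (simp add: bc_def)
lemma bcp_len[simp]: "length bcp = j" by (simp add: bcp_def)
lemma shift_j_per_bc: "shift j (per bc) = per bc"
  using shift_per_periodic[OF bc_ne, of j] by simp
lemma shift_j_C: "shift j C = C"
  using shift_per_periodic[OF c_ne, of j] by (simp add: C_def)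
lemma per_bc_nth: "i < j \<Longrightarrow> per bc i = M - c ! i"
  by (simp add: per_def bc_def word_bar_nth)

lemma eqbCA: "eqb (j - 1) C A"
  unfolding eqb_def
proof (intro allI impI)
  fix i assume i: "i < j - 1"
  hence "i \<noteq> j - 1" "i < j" by auto
  thus "C i = A i" by (simp add: C_nth c_nth)
qed

lemma CA_last: "A (j - 1) = C (j - 1) + 1"
  using Aj j1 by (simp add: C_nth c_nth)

lemma sjA: "seq_le (shift j A) (per bc)"
proof -
  have e: "eqb j A (prepend cp (per bc))" by (simp add: eqb_def prepend_def cp_nth)
  have "seq_le (shift j A) (shift j (prepend cp (per bc)))"
    using eqb_shift_le[OF e] up' by simp
  thus ?thesis using shift_prepend[of cp "per bc"] by simp
qed

lemma bar_per_bc: "seq_bar M (per bc) = C"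
proof
  fix i
  have "i mod j < j" using j_pos by simp
  thus "seq_bar M (per bc) i = C i"
    using c_let[of "i mod j"] by (simp add: seq_bar_def per_def bc_def word_bar_nth C_def)
qed

lemma step:
  assumes inv: "INV m"
  shows "blk m = emit M c (st m) (lab m) \<and> INV (Suc m)"
proof -
  define X where "X = shift (m * j) A"
  have blkX: "blk m = pref X j" by (simp add: blk_def X_def)
  have sX: "shift j X = shift (Suc m * j) A" by (simp add: X_def add.commute)
  show ?thesis
  proof (cases "st m")
    case False
    have h1: "seq_le C X" using inv False by (simp add: INV_def X_def)
    have h2: "seq_le X A" using A_le by (simp add: X_def)
    have "eqb j X C \<or> eqb j X A"
      by (rule between[OF j1 seq_le_len[OF h1] seq_le_len[OF h2] eqbCA CA_last])
    thus ?thesis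
    proof
      assume e: "eqb j X C"
      have b: "blk m = c"
        unfolding blkX by (rule nth_equalityI) (use e in \<open>auto simp: eqb_def C_nth\<close>)
      have l: "\<not> lab m" using b False c_ne_cp by (simp add: lab_def labf_def)
      have "seq_le (shift j C) (shift j X)" using eqb_shift_le[of j C X] e h1 by (simp add: eqb_sym)
      hence "seq_le C (shift (Suc m * j) A)" using shift_j_C sX by simp
      thus ?thesis using b l False by (simp add: emit_def INV_def st_Suc)
    next
      assume e: "eqb j X A"
      have b: "blk m = cp"
        unfolding blkX by (rule nth_equalityI) (use e in \<open>auto simp: eqb_def cp_nth\<close>)
      have l: "lab m" using b False by (simp add: lab_def labf_def)
      have "seq_le (shift j X) (shift j A)" using eqb_shift_le[of j X A] e h2 by simp
      hence "seq_le (shift (Suc m * j) A) (per bc)" using sjA sX seq_le_trans by metis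
      thus ?thesis using b l False cp_plus by (simp add: emit_def INV_def st_Suc)
    qed
  next
    case True
    have h1: "seq_le X (per bc)" using inv True by (simp add: INV_def X_def)
    have h2: "seq_le (seq_bar M A) X" using A_ge by (simp add: X_def)
    have e1: "eqb (j - 1) (seq_bar M A) (per bc)"
      unfolding eqb_def
    proof (intro allI impI)
      fix i assume i: "i < j - 1"
      hence "i \<noteq> j - 1" "i < j" by auto
      thus "seq_bar M A i = per bc i" by (simp add: per_bc_nth c_nth seq_bar_def)
    qed
    have e2: "per bc (j - 1) = seq_bar M A (j - 1) + 1"
      using Aj Alet[of "j - 1"] j1 by (simp add: per_bc_nth c_nth seq_bar_def)
    have "eqb j X (seq_bar M A) \<or> eqb j X (per bc)"
      by (rule between[OF j1 seq_le_len[OF h2] seq_le_len[OF h1] e1 e2])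
    thus ?thesis
    proof
      assume e: "eqb j X (seq_bar M A)"
      have b: "blk m = bcp"
        unfolding blkX by (rule nth_equalityI) (use e in \<open>auto simp: eqb_def cp_nth bcp_def word_bar_nth seq_bar_def\<close>)
      have l: "\<not> lab m" using b True bc_ne_bcp by (simp add: lab_def labf_def)
      have "seq_le (shift j (seq_bar M A)) (shift j X)" using eqb_shift_le[of j "seq_bar M A" X] e h2 by (simp add: eqb_sym)
      hence s1: "seq_le (seq_bar M (shift j A)) (shift j X)" by (simp add: shift_bar)
      have "seq_le (seq_bar M (per bc)) (seq_bar M (shift j A))"
        by (rule bar_le[OF _ _ sjA]) (simp_all add: shift_def Alet per_def bc_def word_bar_nth j_pos)
      hence "seq_le C (shift j X)" using s1 bar_per_bc seq_le_trans by metis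
      hence "seq_le C (shift (Suc m * j) A)" using sX by simp
      thus ?thesis using b l True cp_plus by (simp add: emit_def INV_def st_Suc bcp_def)
    next
      assume e: "eqb j X (per bc)"
      have b: "blk m = bc"
        unfolding blkX by (rule nth_equalityI) (use e in \<open>auto simp: eqb_def per_def\<close>)
      have l: "lab m" using b True by (simp add: lab_def labf_def)
      have "seq_le (shift j X) (shift j (per bc))" using eqb_shift_le[of j X "per bc"] e h1 by simp
      hence "seq_le (shift (Suc m * j) A) (per bc)" using shift_j_per_bc sX by simp
      thus ?thesis using b l True by (simp add: emit_def INV_def st_Suc bc_def)
    qed
  qed
qed

lemma INV_0: "INV 0"
proof -
  have "ltn j C A" unfolding ltn_def
    using eqbCA CA_last j1 by (intro exI[of _ "j - 1"]) auto
  hence "seq_le C A" by (simp add: seq_le_def ltn_seq_less)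
  thus ?thesis by (simp add: INV_def st_0)
qed

lemma INV_all: "INV m"
  by (induction m) (use INV_0 step in auto)

lemma blk_emit: "blk m = emit M c (st m) (lab m)"
  using step INV_all by blast

lemma A_Phi: "A = Phi M c False lab"
proof
  fix p
  define m where "m = p div j"
  define r where "r = p mod j"
  have r: "r < j" using j_pos by (simp add: r_def)
  have p: "p = r + m * j" by (simp add: m_def r_def)
  have "A p = blk m ! r" using r p by (simp add: blk_def shift_def)
  also have "\<dots> = emit M c (st m) (lab m) ! r" by (simp add: blk_emit)
  also have "\<dots> = Phi M c False lab p"
    by (simp add: Phi_def m_def r_def st_alt)
  finally show "A p = Phi M c False lab p" .
qed

end

context bw begin

lemma A_period: "A (t + L) = A t"
  using per_periodic[OF na, of L t] by (simp add: A_def L_def)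

lemma shift_add_L: "shift (n + L) A = shift n A"
  using A_shift_mod[of "n + L"] A_shift_mod[of n] by simp

lemma blk_nth: "r < j \<Longrightarrow> blk m ! r = A (m * j + r)"
  by (simp add: blk_def shift_def add.commute)

lemma blk0: "blk 0 = cp"
  by (rule nth_equalityI) (simp_all add: blk_nth cp_nth blk_def)

lemma lab0: "lab 0" using blk0 st_0 by (simp add: lab_def labf_def)
lemma st1: "st 1" using lab0 st_Suc[of 0] by simp

lemma blk_cases: "blk m = c \<or> blk m = cp \<or> blk m = bc \<or> blk m = bcp"
  using blk_emit[of m] cp_plus by (auto simp: emit_def bc_def bcp_def split: if_splits)

lemma st_A_blk: "st m \<Longrightarrow> blk m = bc \<or> blk m = bcp"
  using blk_emit[of m] cp_plus by (auto simp: emit_def bc_def bcp_def split: if_splits)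
lemma st_B_blk: "\<not> st m \<Longrightarrow> blk m = c \<or> blk m = cp"
  using blk_emit[of m] cp_plus by (auto simp: emit_def split: if_splits)

lemma blk_cp_state: "blk m = cp \<Longrightarrow> \<not> st m \<and> lab m"
proof -
  assume b: "blk m = cp"
  have "\<not> st m" using st_A_blk[of m] b cp_ne_bc cp_ne_bcp by auto
  thus ?thesis using b by (simp add: lab_def labf_def)
qed

lemma blk_bc_state: "j \<ge> 2 \<Longrightarrow> blk m = bc \<Longrightarrow> st m \<and> lab m"
proof -
  assume j2: "j \<ge> 2" and b: "blk m = bc"
  have "st m" using st_B_blk[of m] b c_ne_bc[OF j2] cp_ne_bc by auto
  thus ?thesis using b by (simp add: lab_def labf_def)
qed

lemma j_dvd: "L mod j = 0"
proof (rule ccontr)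
  assume nz: "L mod j \<noteq> 0"
  define r where "r = L mod j"
  define q where "q = L div j"
  have r: "0 < r" "r < j" using nz j_pos by (simp_all add: r_def)
  hence j2: "j \<ge> 2" by simp
  have Lq: "L = q * j + r" by (simp add: q_def r_def)
  have B1: "blk q ! (r + t) = c ! t" if t: "t < j - r" for t
  proof -
    have "blk q ! (r + t) = A (q * j + (r + t))" using t by (simp add: blk_nth)
    also have "\<dots> = A (t + L)" by (rule arg_cong[where f=A]) (use Lq in simp)
    also have "\<dots> = A t" by (rule A_period)
    also have "\<dots> = c ! t"
    proof -
      have "t \<noteq> j - 1" "t < j" using t r by auto
      thus ?thesis by (simp add: c_nth)
    qed
    finally show ?thesis .
  qed
  have B2: "blk (Suc q) ! t = cp ! (j - r + t)" if t: "t < r" for t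
  proof -
    have "blk (Suc q) ! t = A (Suc q * j + t)" using t r by (simp add: blk_nth)
    also have "\<dots> = A ((j - r + t) + L)" by (rule arg_cong[where f=A]) (use Lq r in simp)
    also have "\<dots> = A (j - r + t)" by (rule A_period)
    also have "\<dots> = cp ! (j - r + t)" using t r by (simp add: cp_nth)
    finally show ?thesis .
  qed
  have next_case: False if sq: "st (Suc q)"
  proof -
    have h: "cp ! ((j - r) + t) = M - c ! t" if t: "t < j - (j - r)" for t
    proof -
      have t': "t < r" "t < j" "t \<noteq> j - 1" using t r by auto
      have "blk (Suc q) ! t = M - c ! t"
        using st_A_blk[OF sq] t' by (auto simp: bc_def bcp_def word_bar_nth cp_c)
      thus ?thesis using B2[OF t'(1)] by simp
    qed
    show False by (rule K[of "j - r"]) (use r h in auto)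
  qed
  from blk_cases[of q] show False
  proof (elim disjE)
    assume b: "blk q = c"
    show False by (rule K2[of r]) (use r B1 b in auto)
  next
    assume b: "blk q = cp"
    thus False using blk_cp_state next_case st_Suc by auto
  next
    assume b: "blk q = bc"
    thus False using blk_bc_state[OF j2] next_case st_Suc by auto
  next
    assume b: "blk q = bcp"
    have h: "cp ! (r + t) = M - c ! t" if t: "t < j - r" for t
    proof -
      have "bcp ! (r + t) = c ! t" using B1[OF t] b by simp
      hence "M - cp ! (r + t) = c ! t" using t by (simp add: bcp_def word_bar_nth)
      moreover have "cp ! (r + t) \<le> M" using t by (intro cp_let) simp
      ultimately show ?thesis by simp
    qed
    show False by (rule K[of r]) (use r h in auto)
  qed
qed

definition "k = L div j"

lemma Lk: "L = k * j" using div_mult_mod_eq[of L j] j_dvd by (simp add: k_def)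

lemma blk_k: "blk k = cp"
proof (rule nth_equalityI)
  show "length (blk k) = length cp" by (simp add: blk_def)
  fix r assume "r < length (blk k)"
  hence r: "r < j" by (simp add: blk_def)
  have "blk k ! r = A (r + L)" using r Lk by (simp add: blk_nth add.commute)
  also have "\<dots> = A r" by (rule A_period)
  finally show "blk k ! r = cp ! r" using r by (simp add: cp_nth)
qed

lemma st_k: "\<not> st k" using blk_cp_state[OF blk_k] by simp

lemma k2: "k \<ge> 2"
proof -
  have "k \<noteq> 0"
  proof
    assume "k = 0" hence "L = 0" using Lk by simp
    thus False using L1 by simp
  qed
  moreover have "k \<noteq> 1" using st_k st1 by auto
  ultimately show ?thesis by simp
qed

lemma blk_period: "blk (m + k) = blk m"
proof -
  have "(m + k) * j = m * j + L" using Lk by (simp add: algebra_simps)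
  thus ?thesis by (simp add: blk_def shift_add_L)
qed

lemma st_period: "st (m + k) = st m"
proof (induction m)
  case 0 thus ?case using st_k st_0 by simp
next
  case (Suc m)
  have "st (Suc m + k) = lab (m + k)" using st_Suc[of "m + k"] by simp
  also have "\<dots> = lab m" using Suc blk_period[of m] by (simp add: lab_def)
  finally show ?case by (simp add: st_Suc)
qed

lemma lab_period: "lab (m + k) = lab m"
  using st_Suc[of "m + k"] st_Suc[of m] st_period[of "Suc m"] by simp

lemma lab_mult: "lab (m + t * k) = lab m"
proof (induction t)
  case 0 thus ?case by simp
next
  case (Suc t)
  have "m + Suc t * k = (m + t * k) + k" by simp
  hence "lab (m + Suc t * k) = lab ((m + t * k) + k)" by (rule arg_cong)
  thus ?case using lab_period[of "m + t * k"] Suc by simp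
qed

lemma lab_mod: "lab m = lab (m mod k)"
  using lab_mult[of "m mod k" "m div k"] by (simp add: mod_div_mult_eq)

lemma lab_km1: "\<not> lab (k - 1)"
  using st_k st_Suc[of "k - 1"] k2 by simp

definition "f m = (if lab m then 1 else (0::nat))"
definition "d = map f [0..<k]"
definition "Dn = bn lab"

lemma d_len[simp]: "length d = k" by (simp add: d_def)
lemma d_nth: "i < k \<Longrightarrow> d ! i = Dn i" by (simp add: d_def Dn_def f_def bn_def)
lemma per_d: "per d = Dn"
proof
  fix i
  have "i mod k < k" using k2 by simp
  thus "per d i = Dn i" using lab_mod[of i] by (simp add: per_def d_nth Dn_def bn_def)
qed

lemma comp_blocks:
  "comp_aux M c (st m) (map f [m..<m + n]) = concat (map blk [m..<m + n])"
proof (induction n arbitrary: m)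
  case 0 thus ?case by simp
next
  case (Suc n)
  have u: "[m..<m + Suc n] = m # [Suc m..<Suc m + n]" by (simp add: upt_conv_Cons)
  have fl: "(f m \<noteq> 0) = lab m" by (simp add: f_def)
  have "comp_aux M c (st m) (map f [m..<m + Suc n]) = comp_aux M c (st m) (f m # map f [Suc m..<Suc m + n])"
    unfolding u by simp
  also have "\<dots> = emit M c (st m) (lab m) @ comp_aux M c (st (Suc m)) (map f [Suc m..<Suc m + n])"
    unfolding comp_aux_cons fl st_Suc ..
  also have "\<dots> = blk m @ concat (map blk [Suc m..<Suc m + n])"
    unfolding Suc.IH blk_emit ..
  also have "\<dots> = concat (map blk [m..<m + Suc n])"
    unfolding u by simp
  finally show ?case .
qed

lemma concat_blocks: "concat (map blk [0..<n]) = map A [0..<n * j]"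
proof (induction n)
  case 0 thus ?case by simp
next
  case (Suc n)
  have "blk n = map A [n * j..<n * j + j]"
  proof (rule nth_equalityI)
    show "length (blk n) = length (map A [n * j..<n * j + j])" by (simp add: blk_def)
    fix i assume "i < length (blk n)"
    hence i: "i < j" by (simp add: blk_def)
    have "map A [n * j..<n * j + j] ! i = A (n * j + i)" using i by simp
    thus "blk n ! i = map A [n * j..<n * j + j] ! i" using i by (simp add: blk_nth)
  qed
  moreover have "[0..<Suc n * j] = [0..<n * j] @ [n * j..<n * j + j]"
  proof -
    have e: "Suc n * j = n * j + j" by simp
    show ?thesis unfolding e by (rule upt_add_eq_append) simp
  qed
  ultimately show ?case using Suc by simp
qed

lemma a_eq: "a = map A [0..<L]"
  by (rule nth_equalityI) (simp_all add: A_def per_def L_def)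

lemma compose_eq: "a = compose M c d"
proof -
  have td: "tl d = map f [1..<k]" by (simp add: d_def map_tl[symmetric] tl_upt)
  have "comp_aux M c True (tl d) = concat (map blk [1..<1 + (k - 1)])"
    using comp_blocks[of 1 "k - 1"] st1 k2 td by simp
  hence "compose M c d = blk 0 @ concat (map blk [1..<k])"
    using k2 blk0 cp_plus by (simp add: compose_def)
  also have "\<dots> = concat (map blk [0..<k])" using k2 by (simp add: upt_conv_Cons)
  also have "\<dots> = a" using concat_blocks[of k] a_eq Lk by simp
  finally show ?thesis by simp
qed

end

context bw begin

lemma A_shift_Phi: "shift (m * j) A = Phi M c (st m) (\<lambda>t. lab (t + m))"
  using Phi_shift[OF c_ne, of m M False lab] A_Phi by (simp add: st_alt)

lemma Dn_let: "Dn i \<le> 1" by (simp add: Dn_def bn_def)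
lemma Dn_0: "Dn 0 = 1" using lab0 by (simp add: Dn_def bn_def)

lemma Dn_shift_k: "shift k Dn = Dn"
  by (simp add: Dn_def bn_shift lab_period)

lemma U1: "seq_le (shift 1 Dn) Dn"
proof -
  have ex: "\<exists>r. \<not> lab r" using lab_km1 by blast
  define r0 where "r0 = (LEAST r. \<not> lab r)"
  have r0: "\<not> lab r0" unfolding r0_def by (rule LeastI_ex[OF ex])
  have bel: "lab t" if "t < r0" for t using not_less_Least[of t "\<lambda>r. \<not> lab r"] that unfolding r0_def by blast
  have r0p: "r0 \<ge> 1" using r0 lab0 by (cases r0) auto
  have "ltn r0 (shift 1 Dn) Dn" unfolding ltn_def
  proof (intro exI[of _ "r0 - 1"] conjI)
    show "r0 - 1 < r0" using r0p by simp
    show "eqb (r0 - 1) (shift 1 Dn) Dn"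
      unfolding eqb_def using bel by (auto simp: shift_def Dn_def bn_def)
    show "shift 1 Dn (r0 - 1) < Dn (r0 - 1)"
      using r0 bel[of "r0 - 1"] r0p by (simp add: shift_def Dn_def bn_def)
  qed
  thus ?thesis by (simp add: seq_le_def ltn_seq_less)
qed

lemma U: "seq_le (shift i Dn) Dn"
proof (induction i)
  case 0 thus ?case by (simp add: seq_le_refl)
next
  case (Suc i)
  show ?case
  proof (cases "i = 0")
    case True thus ?thesis using U1 by simp
  next
    case False
    show ?thesis
    proof (cases "lab i")
      case True
      have e: "eqb 1 (shift i Dn) Dn" using True lab0 by (simp add: eqb_def shift_def Dn_def bn_def)
      have "seq_le (shift 1 (shift i Dn)) (shift 1 Dn)" using eqb_shift_le[OF e] Suc.IH by simp
      hence "seq_le (shift (Suc i) Dn) (shift 1 Dn)" by simp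
      thus ?thesis using U1 seq_le_trans by blast
    next
      case False
      have "seq_le (shift (Suc i * j) A) A" by (rule A_le)
      hence "seq_le (Phi M c False (\<lambda>t. lab (t + Suc i))) (Phi M c False lab)"
        using A_shift_Phi[of "Suc i"] A_Phi False st_Suc by simp
      hence "seq_le (bn (\<lambda>t. lab (t + Suc i))) (bn lab)" by (rule Phi_mono_rev[OF c_ne last_c])
      thus ?thesis by (simp add: Dn_def bn_shift)
    qed
  qed
qed

lemma Lw: "seq_le (seq_bar 1 Dn) (shift i Dn)"
proof (induction i)
  case 0
  have "ltn 1 (seq_bar 1 Dn) Dn" unfolding ltn_def using Dn_0
    by (intro exI[of _ 0]) (simp_all add: eqb_def seq_bar_def)
  thus ?case by (simp add: seq_le_def ltn_seq_less)
next
  case (Suc i)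
  show ?case
  proof (cases "lab i")
    case True
    have "seq_le (seq_bar M A) (shift (Suc i * j) A)" by (rule A_ge)
    moreover have "seq_bar M A = Phi M c True (\<lambda>t. \<not> lab t)"
      using Phi_bar[OF c_ne, of M lab] cp_plus cp_lets c_lets A_Phi by simp
    ultimately have "seq_le (Phi M c True (\<lambda>t. \<not> lab t)) (Phi M c True (\<lambda>t. lab (t + Suc i)))"
      using A_shift_Phi[of "Suc i"] True st_Suc by simp
    hence "seq_le (bn (\<lambda>t. \<not> lab t)) (bn (\<lambda>t. lab (t + Suc i)))" by (rule Phi_mono_rev[OF c_ne last_c])
    thus ?thesis by (simp add: Dn_def bn_shift bn_not)
  next
    case False
    have e: "eqb 1 (seq_bar 1 Dn) (shift i Dn)" using False Dn_0 by (simp add: eqb_def shift_def Dn_def bn_def seq_bar_def)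
    have "seq_le (shift 1 (seq_bar 1 Dn)) (shift 1 (shift i Dn))" using eqb_shift_le[OF e] Suc.IH by simp
    hence s1: "seq_le (seq_bar 1 (shift 1 Dn)) (shift (Suc i) Dn)" by (simp add: shift_bar)
    have "seq_le (seq_bar 1 Dn) (seq_bar 1 (shift 1 Dn))"
      by (rule bar_le[OF _ _ U1]) (simp_all add: shift_def Dn_def bn_def)
    thus ?thesis using s1 seq_le_trans by blast
  qed
qed

lemma shift_mult_period: "shift h Dn = Dn \<Longrightarrow> shift (t * h) Dn = Dn"
proof (induction t)
  case 0 thus ?case by simp
next
  case (Suc t)
  have "shift (Suc t * h) Dn = shift h (shift (t * h) Dn)" by (simp add: add.commute)
  thus ?case using Suc by simp
qed

lemma strict:
  assumes i: "1 \<le> i" "i < k"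
  shows "\<not> eqb (k - i) (shift i Dn) Dn"
proof
  assume e: "eqb (k - i) (shift i Dn) Dn"
  define g where "g = k - i"
  have "seq_le (shift g (shift i Dn)) (shift g Dn)" using eqb_shift_le[of g "shift i Dn" Dn] e U[of i]
    by (simp add: g_def)
  moreover have "shift g (shift i Dn) = Dn" using i Dn_shift_k by (simp add: g_def)
  ultimately have "seq_le Dn (shift g Dn)" by simp
  hence pg: "shift g Dn = Dn" using U[of g] seq_le_antisym by blast
  have g: "0 < g" "g < k" using i by (simp_all add: g_def)
  have ex: "\<exists>h. 0 < h \<and> shift h Dn = Dn" using g pg by blast
  define h where "h = (LEAST h. 0 < h \<and> shift h Dn = Dn)"
  have h: "0 < h" "shift h Dn = Dn" using LeastI_ex[OF ex] unfolding h_def by auto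
  have hg: "h \<le> g" using g pg unfolding h_def by (intro Least_le) simp
  have kmod: "k mod h = 0"
  proof (rule ccontr)
    assume nz: "k mod h \<noteq> 0"
    have "shift k Dn = shift (k mod h) (shift ((k div h) * h) Dn)" by (simp add: mod_div_mult_eq)
    hence "shift (k mod h) Dn = Dn" using shift_mult_period[OF h(2)] Dn_shift_k by simp
    hence "h \<le> k mod h" using nz unfolding h_def by (intro Least_le) simp
    thus False using h(1) by (meson mod_less_divisor not_le)
  qed
  define q where "q = k div h"
  have kq: "k = q * h" using div_mult_mod_eq[of k h] kmod by (simp add: q_def)
  have q1: "q \<ge> 1" using kq k2 by (cases q) auto
  have P: "shift ((q - 1) * h) Dn = Dn" by (rule shift_mult_period[OF h(2)])
  have D1: "Dn (h - 1 + (q - 1) * h) = Dn (h - 1)" using fun_cong[OF P, of "h - 1"] by (simp add: shift_def)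
  obtain q' where q': "q = Suc q'" using q1 by (cases q) auto
  have ar: "h - 1 + (q - 1) * h = k - 1" using kq q' h(1) by simp
  have "Dn (h - 1) = Dn (k - 1)" using D1 ar by simp
  hence nl: "\<not> lab (h - 1)" using lab_km1 by (simp add: Dn_def bn_def split: if_splits)
  have sh: "(\<lambda>t. lab (t + h)) = lab"
    using h(2) by (intro bn_inj) (simp add: Dn_def bn_shift)
  have "shift (h * j) A = Phi M c (st h) (\<lambda>t. lab (t + h))" using A_shift_Phi[of h] by simp
  also have "st h = False" using nl st_Suc[of "h - 1"] h(1) by simp
  finally have "shift (h * j) A = A" using sh A_Phi by simp
  moreover have "(h * j) mod L \<noteq> 0"
  proof -
    have "0 < h * j" "h * j < L" using h(1) j_pos hg g Lk by simp_all
    thus ?thesis by simp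
  qed
  ultimately show False using A_less seq_less_irrefl by metis
qed

lemma d_fund: "fundamental 1 d"
proof -
  have lets: "\<forall>x\<in>set d. x \<le> 1" by (auto simp: d_def f_def)
  have "word_le (word_bar 1 (take (k - i) d)) (drop i d) \<and> word_less (drop i d) (take (k - i) d)"
    if i: "1 \<le> i" "i < k" for i
  proof
    have l: "len (k - i) (seq_bar 1 Dn) (shift i Dn)" using Lw by (rule seq_le_len)
    have e1: "eqb (k - i) (seq_bar 1 Dn) (pad0 (word_bar 1 (take (k - i) d)))"
      using i by (auto simp: eqb_def seq_bar_def pad0_def word_bar_nth d_nth)
    have e2: "eqb (k - i) (shift i Dn) (pad0 (drop i d))"
      using i by (auto simp: eqb_def shift_def pad0_def d_nth add.commute)
    have "len (k - i) (pad0 (word_bar 1 (take (k - i) d))) (pad0 (drop i d))"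
      using len_transfer[OF l e1 e2] .
    thus "word_le (word_bar 1 (take (k - i) d)) (drop i d)"
      using word_le_len[of "word_bar 1 (take (k - i) d)" "drop i d"] i by simp
  next
    have l: "len (k - i) (shift i Dn) Dn" using U by (rule seq_le_len)
    hence lt: "ltn (k - i) (shift i Dn) Dn" using strict[OF i] by (simp add: len_def)
    have e2: "eqb (k - i) (shift i Dn) (pad0 (drop i d))"
      using i by (auto simp: eqb_def shift_def pad0_def d_nth add.commute)
    have e1: "eqb (k - i) Dn (pad0 (take (k - i) d))"
      using i by (auto simp: eqb_def pad0_def d_nth)
    have "ltn (k - i) (pad0 (drop i d)) (pad0 (take (k - i) d))"
      using ltn_transfer[OF lt e2 e1] .
    thus "word_less (drop i d) (take (k - i) d)"
      using word_less_ltn[of "drop i d" "take (k - i) d"] i by simp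
  qed
  thus ?thesis using k2 lets by (simp add: fundamental_def)
qed

lemma reducible: "\<exists>c d. fundamental M c \<and> fundamental 1 d \<and> a = compose M c d"
  using c_fund d_fund compose_eq by blast

end

theorem proposition2p19:
  fixes M :: nat and a :: "nat list"
  assumes "M \<ge> 1" and "fundamental M a"
  shows "irreducible_seq M (per a) \<longleftrightarrow> irreducible_word M a"
proof
  assume "irreducible_seq M (per a)"
  thus "irreducible_word M a" using forward assms by blast
next
  assume iw: "irreducible_word M a"
  show "irreducible_seq M (per a)"
    unfolding irreducible_seq_def
  proof (intro conjI allI impI)
    show "in_V M (per a)" by (rule F3[OF assms(2)])
    fix j assume j1: "j \<ge> 1" and h: "0 < per a (j - 1) \<and> in_V M (per (word_minus (pref (per a) j)))"
    show "seq_less (prepend (pref (per a) j) (per (word_plus (word_bar M (pref (per a) j))))) (per a)"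
    proof (rule ccontr)
      assume nl: "\<not> seq_less (prepend (pref (per a) j) (per (word_plus (word_bar M (pref (per a) j))))) (per a)"
      define w where "w = pref (per a) j"
      have na: "a \<noteq> []" using assms(2) fund_nonempty by blast
      have lets: "per a i \<le> M" for i using per_letters[OF na] fund_letters[OF assms(2)] by blast
      have wlen: "length w = j" by (simp add: w_def)
      have wne: "w \<noteq> []" using wlen j1 by auto
      have wlast: "w ! (j - 1) = per a (j - 1)" using j1 by (simp add: w_def)
      have wp: "word_plus (word_bar M w) = word_bar M (word_minus w)"
      proof (rule nth_equalityI)
        show "length (word_plus (word_bar M w)) = length (word_bar M (word_minus w))"
          using wne by simp
        fix i assume "i < length (word_plus (word_bar M w))"
        hence i: "i < j" using wne wlen by simp
        have wi: "w ! i = per a i" using i by (simp add: w_def)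
        show "word_plus (word_bar M w) ! i = word_bar M (word_minus w) ! i"
          using i wne wlen h lets[of i] wi
          by (auto simp: word_plus_nth word_minus_nth word_bar_nth)
      qed
      have up: "seq_le (per a) (prepend w (per (word_bar M (word_minus w))))"
        using nl wp not_less_le unfolding w_def by metis
      interpret bw M a j
        using assms j1 h up by unfold_locales (simp_all add: w_def)
      show False using reducible iw unfolding irreducible_word_def by blast
    qed
  qed
qed

end
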